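(* Let $n\ge 3$ be an odd integer and $(\mathcal{C},\Sigma)$ an $n$-angulated category. Define a relation on objects of $\mathcal{C}$ by $A\sim B$ iff there exist objects $C_1,\dots,C_n$ and two $n$-angles $A\oplus C_1\xrightarrow{\alpha_1}C_2\xrightarrow{\alpha_2}\cdots\xrightarrow{\alpha_{n-1}}C_n\xrightarrow{\alpha_n}\Sigma A\oplus\Sigma C_1$ and $B\oplus C_1\xrightarrow{\beta_1}C_2\xrightarrow{\beta_2}\cdots\xrightarrow{\beta_{n-1}}C_n\xrightarrow{\beta_n}\Sigma B\oplus\Sigma C_1$ in $\mathcal{C}$. Then: (1) $\sim$ is an equivalence relation. (2) The set $\pi$ of equivalence classes $\{A\}$ is an abelian group under $\{A\}+\{B\}=\{A\oplus B\}$, and the inverse of $\{A\}$ is $\{\Sigma A\}$. (3) The assignment $\{A\}\leftrightarrow[A]$ gives an isomorphism of groups $\pi\cong K_0(\mathcal{C})$.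
   Context: All categories are small. Fix an integer $n\ge 3$. Let $\mathcal{C}$ be an additive category with an automorphism $\Sigma$. An $n$-$\Sigma$-sequence in $\mathcal{C}$ is a diagram $A_1\xrightarrow{\alpha_1}A_2\xrightarrow{\alpha_2}\cdots\xrightarrow{\alpha_{n-1}}A_n\xrightarrow{\alpha_n}\Sigma A_1$. Its left rotation is $A_2\xrightarrow{\alpha_2}\cdots\xrightarrow{\alpha_n}\Sigma A_1\xrightarrow{(-1)^n\Sigma\alpha_1}\Sigma A_2$. A morphism from $(A_\bullet,\alpha)$ to $(B_\bullet,\beta)$ is a tuple $(\varphi_1,\dots,\varphi_n)$, $\varphi_i:A_i\to B_i$, with $\beta_i\varphi_i=\varphi_{i+1}\alpha_i$ for $1\le i\le n-1$ and $\beta_n\varphi_n=(\Sigma\varphi_1)\alpha_n$; it is an isomorphism if all $\varphi_i$ are isomorphisms. Direct sums of sequences are taken termwise. $(\mathcal{C},\Sigma)$ is $n$-angulated if it is equipped with a collection $\mathscr N$ of $n$-$\Sigma$-sequences, called $n$-angles, such that: (N1)(a) $\mathscr N$ is closed under direct sums, direct summands and isomorphisms of $n$-$\Sigma$-sequences; (b) for every object $A$, the trivial sequence $A\xrightarrow{1}A\to0\to\cdots\to0\to\Sigma A$ is in $\mathscr N$; (c) every morphism $A_1\to A_2$ is the first morphism of some $n$-angle; (N2) an $n$-$\Sigma$-sequence is in $\mathscr N$ iff its left rotation is; (N3) given $n$-angles $(A_\bullet,\alpha),(B_\bullet,\beta)$ and $\varphi_1:A_1\to B_1$, $\varphi_2:A_2\to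 B_2$ with $\beta_1\varphi_1=\varphi_2\alpha_1$, there exist $\varphi_3,\dots,\varphi_n$ making $(\varphi_1,\dots,\varphi_n)$ a morphism; (N4) in (N3) the $\varphi_i$ can be chosen so that the mapping cone $A_2\oplus B_1\to A_3\oplus B_2\to\cdots\to\Sigma A_1\oplus B_n\to\Sigma A_2\oplus\Sigma B_1$, with maps $\left[\begin{smallmatrix}-\alpha_{i+1}&0\\ \varphi_{i+1}&\beta_i\end{smallmatrix}\right]$ ($1\le i\le n-1$) and last map $\left[\begin{smallmatrix}-\Sigma\alpha_1&0\\ \Sigma\varphi_1&\beta_n\end{smallmatrix}\right]$, is an $n$-angle. Grothendieck group: let $F(\mathcal{C})$ be the free abelian group on the isomorphism classes $\langle A\rangle$ of objects of $\mathcal{C}$. For an $n$-angle $A_\bullet$ put $\chi(A_\bullet)=\sum_{i=1}^n(-1)^{i+1}\langle A_i\rangle$. Let $R(\mathcal{C})$ be the subgroup generated by all $\chi(A_\bullet)$ ($A_\bullet$ an $n$-angle), together with $\langle 0\rangle$ when $n$ is even. Then $K_0(\mathcal{C})=F(\mathcal{C})/R(\mathcal{C})$, and $[A]$ denotes the class of $\langle A\rangle$. *)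

theory Defs
  imports "HOL-Algebra.Free_Abelian_Groups"
begin

text \<open>A (small) category given by its set of objects, its set of morphisms,
domain/codomain maps, composition (cmp g f = g after f) and identities,
together with the additive structure on hom-sets (pls = addition,
zro A B = zero morphism A -> B, ngt = negation).\<close>

record ('o, 'm) addcat =
  ob  :: "'o set"
  ar  :: "'m set"
  dm  :: "'m \<Rightarrow> 'o"
  cd  :: "'m \<Rightarrow> 'o"
  cmp :: "'m \<Rightarrow> 'm \<Rightarrow> 'm"
  idn :: "'o \<Rightarrow> 'm"
  pls :: "'m \<Rightarrow> 'm \<Rightarrow> 'm"
  zro :: "'o \<Rightarrow> 'o \<Rightarrow> 'm"
  ngt :: "'m \<Rightarrow> 'm"

definition Hom :: "('o, 'm) addcat \<Rightarrow> 'o \<Rightarrow> 'o \<Rightarrow> 'm set" where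
  "Hom C A B = {f \<in> ar C. dm C f = A \<and> cd C f = B}"

definition is_category :: "('o, 'm) addcat \<Rightarrow> bool" where
  "is_category C \<longleftrightarrow>
     (\<forall>f\<in>ar C. dm C f \<in> ob C \<and> cd C f \<in> ob C) \<and>
     (\<forall>A\<in>ob C. idn C A \<in> Hom C A A) \<and>
     (\<forall>f\<in>ar C. \<forall>g\<in>ar C. cd C f = dm C g \<longrightarrow> cmp C g f \<in> Hom C (dm C f) (cd C g)) \<and>
     (\<forall>f\<in>ar C. cmp C (idn C (cd C f)) f = f \<and> cmp C f (idn C (dm C f)) = f) \<and>
     (\<forall>f\<in>ar C. \<forall>g\<in>ar C. \<forall>h\<in>ar C. cd C f = dm C g \<longrightarrow> cd C g = dm C h \<longrightarrow>
        cmp C h (cmp C g f) = cmp C (cmp C h g) f)"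

definition is_biprod :: "('o, 'm) addcat \<Rightarrow> 'o \<Rightarrow> 'o \<Rightarrow> 'o \<Rightarrow> 'm \<times> 'm \<times> 'm \<times> 'm \<Rightarrow> bool" where
  "is_biprod C X A B d \<longleftrightarrow> (case d of (p1, p2, i1, i2) \<Rightarrow>
     p1 \<in> Hom C X A \<and> p2 \<in> Hom C X B \<and> i1 \<in> Hom C A X \<and> i2 \<in> Hom C B X \<and>
     cmp C p1 i1 = idn C A \<and> cmp C p2 i2 = idn C B \<and>
     cmp C p1 i2 = zro C B A \<and> cmp C p2 i1 = zro C A B \<and>
     pls C (cmp C i1 p1) (cmp C i2 p2) = idn C X)"

definition biprod :: "('o, 'm) addcat \<Rightarrow> 'o \<Rightarrow> 'o \<Rightarrow> 'o \<Rightarrow> bool" where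
  "biprod C X A B \<longleftrightarrow> (\<exists>d. is_biprod C X A B d)"

definition is_zero_obj :: "('o, 'm) addcat \<Rightarrow> 'o \<Rightarrow> bool" where
  "is_zero_obj C Z \<longleftrightarrow> Z \<in> ob C \<and> idn C Z = zro C Z Z"

definition is_additive :: "('o, 'm) addcat \<Rightarrow> bool" where
  "is_additive C \<longleftrightarrow> is_category C \<and>
     (\<forall>A\<in>ob C. \<forall>B\<in>ob C.
        zro C A B \<in> Hom C A B \<and>
        (\<forall>f\<in>Hom C A B. ngt C f \<in> Hom C A B \<and> pls C f (zro C A B) = f \<and>
                          pls C f (ngt C f) = zro C A B) \<and>
        (\<forall>f\<in>Hom C A B. \<forall>g\<in>Hom C A B. pls C f g \<in> Hom C A B \<and> pls C f g = pls C g f) \<and>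
        (\<forall>f\<in>Hom C A B. \<forall>g\<in>Hom C A B. \<forall>h\<in>Hom C A B.
           pls C (pls C f g) h = pls C f (pls C g h))) \<and>
     (\<forall>A\<in>ob C. \<forall>B\<in>ob C. \<forall>D\<in>ob C.
        (\<forall>f\<in>Hom C A B. \<forall>g\<in>Hom C B D. \<forall>g'\<in>Hom C B D.
           cmp C (pls C g g') f = pls C (cmp C g f) (cmp C g' f)) \<and>
        (\<forall>f\<in>Hom C A B. \<forall>f'\<in>Hom C A B. \<forall>g\<in>Hom C B D.
           cmp C g (pls C f f') = pls C (cmp C g f) (cmp C g f'))) \<and>
     (\<exists>Z. is_zero_obj C Z) \<and>
     (\<forall>A\<in>ob C. \<forall>B\<in>ob C. \<exists>X\<in>ob C. biprod C X A B)"

definition is_automorphism :: "('o, 'm) addcat \<Rightarrow> ('o \<Rightarrow> 'o) \<Rightarrow> ('m \<Rightarrow> 'm) \<Rightarrow> bool" where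
  "is_automorphism C So Sm \<longleftrightarrow>
     bij_betw So (ob C) (ob C) \<and> bij_betw Sm (ar C) (ar C) \<and>
     (\<forall>A\<in>ob C. \<forall>B\<in>ob C. \<forall>f\<in>Hom C A B. Sm f \<in> Hom C (So A) (So B)) \<and>
     (\<forall>A\<in>ob C. Sm (idn C A) = idn C (So A)) \<and>
     (\<forall>f\<in>ar C. \<forall>g\<in>ar C. cd C f = dm C g \<longrightarrow> Sm (cmp C g f) = cmp C (Sm g) (Sm f)) \<and>
     (\<forall>A\<in>ob C. \<forall>B\<in>ob C. \<forall>f\<in>Hom C A B. \<forall>g\<in>Hom C A B. Sm (pls C f g) = pls C (Sm f) (Sm g))"

text \<open>An n-\<Sigma>-sequence is a pair (X, a) of lists of length n, 0-indexed:
  X!0 -a!0-> X!1 -> ... -> X!(n-1) -a!(n-1)-> \<Sigma>(X!0).\<close>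

type_synonym ('o, 'm) nseq = "'o list \<times> 'm list"

definition is_nseq :: "nat \<Rightarrow> ('o, 'm) addcat \<Rightarrow> ('o \<Rightarrow> 'o) \<Rightarrow> ('o, 'm) nseq \<Rightarrow> bool" where
  "is_nseq n C So S \<longleftrightarrow> (case S of (X, a) \<Rightarrow>
     length X = n \<and> length a = n \<and> set X \<subseteq> ob C \<and>
     (\<forall>i. Suc i < n \<longrightarrow> a ! i \<in> Hom C (X ! i) (X ! Suc i)) \<and>
     a ! (n - 1) \<in> Hom C (X ! (n - 1)) (So (X ! 0)))"

definition is_nseq_morph :: "nat \<Rightarrow> ('o, 'm) addcat \<Rightarrow> ('m \<Rightarrow> 'm)
    \<Rightarrow> ('o, 'm) nseq \<Rightarrow> ('o, 'm) nseq \<Rightarrow> 'm list \<Rightarrow> bool" where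
  "is_nseq_morph n C Sm S T phi \<longleftrightarrow> (case S of (X, a) \<Rightarrow> case T of (Y, b) \<Rightarrow>
     length phi = n \<and> (\<forall>i<n. phi ! i \<in> Hom C (X ! i) (Y ! i)) \<and>
     (\<forall>i. Suc i < n \<longrightarrow> cmp C (b ! i) (phi ! i) = cmp C (phi ! Suc i) (a ! i)) \<and>
     cmp C (b ! (n - 1)) (phi ! (n - 1)) = cmp C (Sm (phi ! 0)) (a ! (n - 1)))"

definition is_iso_arr :: "('o, 'm) addcat \<Rightarrow> 'm \<Rightarrow> bool" where
  "is_iso_arr C f \<longleftrightarrow> f \<in> ar C \<and> (\<exists>g\<in>Hom C (cd C f) (dm C f).
      cmp C g f = idn C (dm C f) \<and> cmp C f g = idn C (cd C f))"

definition is_nseq_iso :: "nat \<Rightarrow> ('o, 'm) addcat \<Rightarrow> ('m \<Rightarrow> 'm)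
    \<Rightarrow> ('o, 'm) nseq \<Rightarrow> ('o, 'm) nseq \<Rightarrow> 'm list \<Rightarrow> bool" where
  "is_nseq_iso n C Sm S T phi \<longleftrightarrow> is_nseq_morph n C Sm S T phi \<and> (\<forall>i<n. is_iso_arr C (phi ! i))"

text \<open>U is a direct sum of S and T: termwise biproducts such that the canonical
inclusions and projections are morphisms of n-\<Sigma>-sequences (equivalently, the
morphisms of U are the diagonal sums of those of S and T).\<close>

definition is_nseq_sum :: "nat \<Rightarrow> ('o, 'm) addcat \<Rightarrow> ('m \<Rightarrow> 'm)
    \<Rightarrow> ('o, 'm) nseq \<Rightarrow> ('o, 'm) nseq \<Rightarrow> ('o, 'm) nseq \<Rightarrow> bool" where
  "is_nseq_sum n C Sm U S T \<longleftrightarrow>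
     (\<exists>p1 p2 i1 i2. (\<forall>i<n. is_biprod C (fst U ! i) (fst S ! i) (fst T ! i)
                                (p1 ! i, p2 ! i, i1 ! i, i2 ! i)) \<and>
        is_nseq_morph n C Sm U S p1 \<and> is_nseq_morph n C Sm U T p2 \<and>
        is_nseq_morph n C Sm S U i1 \<and> is_nseq_morph n C Sm T U i2)"

definition rotate_nseq :: "nat \<Rightarrow> ('o, 'm) addcat \<Rightarrow> ('o \<Rightarrow> 'o) \<Rightarrow> ('m \<Rightarrow> 'm)
    \<Rightarrow> ('o, 'm) nseq \<Rightarrow> ('o, 'm) nseq" where
  "rotate_nseq n C So Sm S = (case S of (X, a) \<Rightarrow>
     (tl X @ [So (hd X)],
      tl a @ [if even n then Sm (hd a) else ngt C (Sm (hd a))]))"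

definition trivial_nseq :: "nat \<Rightarrow> ('o, 'm) addcat \<Rightarrow> ('o \<Rightarrow> 'o) \<Rightarrow> 'o \<Rightarrow> 'o \<Rightarrow> ('o, 'm) nseq" where
  "trivial_nseq n C So A Z =
     (A # A # replicate (n - 2) Z,
      idn C A # zro C A Z # replicate (n - 3) (zro C Z Z) @ [zro C Z (So A)])"

text \<open>D is a mapping cone of the morphism phi : (X,a) -> (Y,b):
  D!i = X!(i+1) \<oplus> Y!i (with X!n read as \<Sigma>(X!0)), and morphisms given by the
  matrices [[-a!(i+1), 0], [phi!(i+1), b!i]], the last one being
  [[-\<Sigma>(a!0), 0], [\<Sigma>(phi!0), b!(n-1)]] into \<Sigma>(D!0) = \<Sigma>X!1 \<oplus> \<Sigma>Y!0.\<close>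

definition mat2 :: "('o, 'm) addcat \<Rightarrow> 'm \<times> 'm \<times> 'm \<times> 'm \<Rightarrow> 'm \<times> 'm \<times> 'm \<times> 'm
    \<Rightarrow> 'm \<Rightarrow> 'm \<Rightarrow> 'm \<Rightarrow> 'm" where
  "mat2 C ds dt u v w = (case ds of (p1, p2, _, _) \<Rightarrow> case dt of (_, _, k1, k2) \<Rightarrow>
     pls C (pls C (cmp C k1 (cmp C u p1)) (cmp C k2 (cmp C v p1))) (cmp C k2 (cmp C w p2)))"

definition is_mapping_cone :: "nat \<Rightarrow> ('o, 'm) addcat \<Rightarrow> ('o \<Rightarrow> 'o) \<Rightarrow> ('m \<Rightarrow> 'm)
    \<Rightarrow> ('o, 'm) nseq \<Rightarrow> ('o, 'm) nseq \<Rightarrow> 'm list \<Rightarrow> ('o, 'm) nseq \<Rightarrow> bool" where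
  "is_mapping_cone n C So Sm S T phi Cn \<longleftrightarrow> (case S of (X, a) \<Rightarrow> case T of (Y, b) \<Rightarrow>
     case Cn of (D, c) \<Rightarrow>
     length D = n \<and> length c = n \<and>
     (\<exists>d :: nat \<Rightarrow> 'm \<times> 'm \<times> 'm \<times> 'm.
        (\<forall>i<n. is_biprod C (D ! i) (if Suc i < n then X ! Suc i else So (X ! 0)) (Y ! i) (d i)) \<and>
        (\<forall>i. Suc i < n \<longrightarrow>
           c ! i = mat2 C (d i) (d (Suc i)) (ngt C (a ! Suc i)) (phi ! Suc i) (b ! i)) \<and>
        c ! (n - 1) = mat2 C (d (n - 1)) (case d 0 of (p1, p2, i1, i2) \<Rightarrow> (Sm p1, Sm p2, Sm i1, Sm i2))
                         (ngt C (Sm (a ! 0))) (Sm (phi ! 0)) (b ! (n - 1))))"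

definition n_angulated :: "nat \<Rightarrow> ('o, 'm) addcat \<Rightarrow> ('o \<Rightarrow> 'o) \<Rightarrow> ('m \<Rightarrow> 'm)
    \<Rightarrow> ('o, 'm) nseq set \<Rightarrow> bool" where
  "n_angulated n C So Sm N \<longleftrightarrow>
     3 \<le> n \<and> is_additive C \<and> is_automorphism C So Sm \<and>
     (\<forall>S\<in>N. is_nseq n C So S) \<and>
     \<comment> \<open>(N1a)\<close>
     (\<forall>U S T. is_nseq n C So U \<and> is_nseq n C So S \<and> is_nseq n C So T \<and> is_nseq_sum n C Sm U S T
        \<longrightarrow> (U \<in> N \<longleftrightarrow> S \<in> N \<and> T \<in> N)) \<and>
     (\<forall>S T phi. is_nseq n C So S \<and> T \<in> N \<and> is_nseq_iso n C Sm S T phi \<longrightarrow> S \<in> N) \<and>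
     \<comment> \<open>(N1b)\<close>
     (\<forall>A\<in>ob C. \<forall>Z. is_zero_obj C Z \<longrightarrow> trivial_nseq n C So A Z \<in> N) \<and>
     \<comment> \<open>(N1c)\<close>
     (\<forall>f\<in>ar C. \<exists>S\<in>N. fst S ! 0 = dm C f \<and> fst S ! 1 = cd C f \<and> snd S ! 0 = f) \<and>
     \<comment> \<open>(N2)\<close>
     (\<forall>S. is_nseq n C So S \<longrightarrow> (S \<in> N \<longleftrightarrow> rotate_nseq n C So Sm S \<in> N)) \<and>
     \<comment> \<open>(N3)\<close>
     (\<forall>S\<in>N. \<forall>T\<in>N. \<forall>f0 f1.
        f0 \<in> Hom C (fst S ! 0) (fst T ! 0) \<and> f1 \<in> Hom C (fst S ! 1) (fst T ! 1) \<and>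
        cmp C (snd T ! 0) f0 = cmp C f1 (snd S ! 0) \<longrightarrow>
        (\<exists>phi. phi ! 0 = f0 \<and> phi ! 1 = f1 \<and> is_nseq_morph n C Sm S T phi)) \<and>
     \<comment> \<open>(N4)\<close>
     (\<forall>S\<in>N. \<forall>T\<in>N. \<forall>f0 f1.
        f0 \<in> Hom C (fst S ! 0) (fst T ! 0) \<and> f1 \<in> Hom C (fst S ! 1) (fst T ! 1) \<and>
        cmp C (snd T ! 0) f0 = cmp C f1 (snd S ! 0) \<longrightarrow>
        (\<exists>phi. phi ! 0 = f0 \<and> phi ! 1 = f1 \<and> is_nseq_morph n C Sm S T phi \<and>
               (\<exists>Cn\<in>N. is_mapping_cone n C So Sm S T phi Cn)))"

definition sim_rel :: "nat \<Rightarrow> ('o, 'm) addcat \<Rightarrow> ('o, 'm) nseq set \<Rightarrow> 'o \<Rightarrow> 'o \<Rightarrow> bool" where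
  "sim_rel n C N A B \<longleftrightarrow> A \<in> ob C \<and> B \<in> ob C \<and>
     (\<exists>C1 Cs D D' a b. C1 \<in> ob C \<and> length Cs = n - 1 \<and>
        biprod C D A C1 \<and> biprod C D' B C1 \<and> (D # Cs, a) \<in> N \<and> (D' # Cs, b) \<in> N)"

definition sim_class :: "nat \<Rightarrow> ('o, 'm) addcat \<Rightarrow> ('o, 'm) nseq set \<Rightarrow> 'o \<Rightarrow> 'o set" where
  "sim_class n C N A = {B. sim_rel n C N A B}"

text \<open>The set \<pi> of equivalence classes with {A} + {B} = {A \<oplus> B} (for some chosen
biproduct; well-definedness is part of the theorem) and unit the class of a
zero object.\<close>

definition pi_group :: "nat \<Rightarrow> ('o, 'm) addcat \<Rightarrow> ('o, 'm) nseq set \<Rightarrow> 'o set monoid" where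
  "pi_group n C N =
     \<lparr>carrier = sim_class n C N ` ob C,
      mult = (\<lambda>x y. sim_class n C N
                 (SOME X. X \<in> ob C \<and> biprod C X (SOME A. A \<in> x) (SOME B. B \<in> y))),
      one = sim_class n C N (SOME Z. is_zero_obj C Z)\<rparr>"

definition isomorphic_obj :: "('o, 'm) addcat \<Rightarrow> 'o \<Rightarrow> 'o \<Rightarrow> bool" where
  "isomorphic_obj C A B \<longleftrightarrow> (\<exists>f\<in>Hom C A B. is_iso_arr C f)"

definition iso_class :: "('o, 'm) addcat \<Rightarrow> 'o \<Rightarrow> 'o set" where
  "iso_class C A = {B \<in> ob C. isomorphic_obj C A B}"

definition FC :: "('o, 'm) addcat \<Rightarrow> ('o set \<Rightarrow>\<^sub>0 int) monoid" where
  "FC C = free_Abelian_group (iso_class C ` ob C)"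

definition chi :: "nat \<Rightarrow> ('o, 'm) addcat \<Rightarrow> ('o, 'm) nseq \<Rightarrow> 'o set \<Rightarrow>\<^sub>0 int" where
  "chi n C S = (\<Sum>i<n. frag_cmul ((-1) ^ i) (frag_of (iso_class C (fst S ! i))))"

definition RC :: "nat \<Rightarrow> ('o, 'm) addcat \<Rightarrow> ('o, 'm) nseq set \<Rightarrow> ('o set \<Rightarrow>\<^sub>0 int) set" where
  "RC n C N = generate (FC C)
      (chi n C ` N \<union> (if even n then {frag_of (iso_class C (SOME Z. is_zero_obj C Z))} else {}))"

definition K0 :: "nat \<Rightarrow> ('o, 'm) addcat \<Rightarrow> ('o, 'm) nseq set \<Rightarrow> ('o set \<Rightarrow>\<^sub>0 int) set monoid" where
  "K0 n C N = FC C Mod RC n C N"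

definition K0_class :: "nat \<Rightarrow> ('o, 'm) addcat \<Rightarrow> ('o, 'm) nseq set \<Rightarrow> 'o \<Rightarrow> ('o set \<Rightarrow>\<^sub>0 int) set" where
  "K0_class n C N A = r_coset (FC C) (RC n C N) (frag_of (iso_class C A))"

end

theory Submission
  imports Defs
begin

locale acat =
  fixes C :: "('o, 'm) addcat"
  assumes additive: "is_additive C"
begin

lemma cat: "is_category C" using additive unfolding is_additive_def by blast

lemma Hom_iff: "f \<in> Hom C A B \<longleftrightarrow> f \<in> ar C \<and> dm C f = A \<and> cd C f = B"
  by (simp add: Hom_def)

lemma dm_ob[simp]: "f \<in> ar C \<Longrightarrow> dm C f \<in> ob C"
  using cat unfolding is_category_def by blast
lemma cd_ob[simp]: "f \<in> ar C \<Longrightarrow> cd C f \<in> ob C"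
  using cat unfolding is_category_def by blast

lemma cmp_Hom: "f \<in> ar C \<Longrightarrow> g \<in> ar C \<Longrightarrow> cd C f = dm C g \<Longrightarrow> cmp C g f \<in> Hom C (dm C f) (cd C g)"
  using cat unfolding is_category_def by blast

lemma cmp_ar[simp]: "f \<in> ar C \<Longrightarrow> g \<in> ar C \<Longrightarrow> cd C f = dm C g \<Longrightarrow> cmp C g f \<in> ar C"
  and dm_cmp[simp]: "f \<in> ar C \<Longrightarrow> g \<in> ar C \<Longrightarrow> cd C f = dm C g \<Longrightarrow> dm C (cmp C g f) = dm C f"
  and cd_cmp[simp]: "f \<in> ar C \<Longrightarrow> g \<in> ar C \<Longrightarrow> cd C f = dm C g \<Longrightarrow> cd C (cmp C g f) = cd C g"
  using cmp_Hom by (auto simp: Hom_iff)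

lemma idn_ar[simp]: "A \<in> ob C \<Longrightarrow> idn C A \<in> ar C"
  and dm_idn[simp]: "A \<in> ob C \<Longrightarrow> dm C (idn C A) = A"
  and cd_idn[simp]: "A \<in> ob C \<Longrightarrow> cd C (idn C A) = A"
  using cat unfolding is_category_def Hom_iff by blast+

lemma cmp_idn_l[simp]: "f \<in> ar C \<Longrightarrow> cd C f = B \<Longrightarrow> cmp C (idn C B) f = f"
  and cmp_idn_r[simp]: "f \<in> ar C \<Longrightarrow> dm C f = A \<Longrightarrow> cmp C f (idn C A) = f"
  using cat unfolding is_category_def by blast+

lemma cmp_assoc[simp]: "f \<in> ar C \<Longrightarrow> g \<in> ar C \<Longrightarrow> h \<in> ar C \<Longrightarrow> cd C f = dm C g \<Longrightarrow> cd C g = dm C h \<Longrightarrow>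
   cmp C (cmp C h g) f = cmp C h (cmp C g f)"
  using cat unfolding is_category_def by metis

lemma addH: "A \<in> ob C \<Longrightarrow> B \<in> ob C \<Longrightarrow>
        zro C A B \<in> Hom C A B \<and>
        (\<forall>f\<in>Hom C A B. ngt C f \<in> Hom C A B \<and> pls C f (zro C A B) = f \<and>
                          pls C f (ngt C f) = zro C A B) \<and>
        (\<forall>f\<in>Hom C A B. \<forall>g\<in>Hom C A B. pls C f g \<in> Hom C A B \<and> pls C f g = pls C g f) \<and>
        (\<forall>f\<in>Hom C A B. \<forall>g\<in>Hom C A B. \<forall>h\<in>Hom C A B.
           pls C (pls C f g) h = pls C f (pls C g h))"
  using additive unfolding is_additive_def by blast

lemma bilin: "A \<in> ob C \<Longrightarrow> B \<in> ob C \<Longrightarrow> D \<in> ob C \<Longrightarrow>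
        (\<forall>f\<in>Hom C A B. \<forall>g\<in>Hom C B D. \<forall>g'\<in>Hom C B D.
           cmp C (pls C g g') f = pls C (cmp C g f) (cmp C g' f)) \<and>
        (\<forall>f\<in>Hom C A B. \<forall>f'\<in>Hom C A B. \<forall>g\<in>Hom C B D.
           cmp C g (pls C f f') = pls C (cmp C g f) (cmp C g f'))"
  using additive unfolding is_additive_def by blast

lemma zro_ar[simp]: "A \<in> ob C \<Longrightarrow> B \<in> ob C \<Longrightarrow> zro C A B \<in> ar C"
  and dm_zro[simp]: "A \<in> ob C \<Longrightarrow> B \<in> ob C \<Longrightarrow> dm C (zro C A B) = A"
  and cd_zro[simp]: "A \<in> ob C \<Longrightarrow> B \<in> ob C \<Longrightarrow> cd C (zro C A B) = B"
  using addH[of A B] by (auto simp: Hom_iff)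

lemma pls_ar[simp]: "f \<in> ar C \<Longrightarrow> g \<in> ar C \<Longrightarrow> dm C g = dm C f \<Longrightarrow> cd C g = cd C f \<Longrightarrow> pls C f g \<in> ar C"
  and dm_pls[simp]: "f \<in> ar C \<Longrightarrow> g \<in> ar C \<Longrightarrow> dm C g = dm C f \<Longrightarrow> cd C g = cd C f \<Longrightarrow> dm C (pls C f g) = dm C f"
  and cd_pls[simp]: "f \<in> ar C \<Longrightarrow> g \<in> ar C \<Longrightarrow> dm C g = dm C f \<Longrightarrow> cd C g = cd C f \<Longrightarrow> cd C (pls C f g) = cd C f"
  using addH[of "dm C f" "cd C f"] by (auto simp: Hom_iff)

lemma ngt_ar[simp]: "f \<in> ar C \<Longrightarrow> ngt C f \<in> ar C"
  and dm_ngt[simp]: "f \<in> ar C \<Longrightarrow> dm C (ngt C f) = dm C f"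
  and cd_ngt[simp]: "f \<in> ar C \<Longrightarrow> cd C (ngt C f) = cd C f"
  using addH[of "dm C f" "cd C f"] by (auto simp: Hom_iff)

lemma pls_zro_r[simp]: "f \<in> ar C \<Longrightarrow> A = dm C f \<Longrightarrow> B = cd C f \<Longrightarrow> pls C f (zro C A B) = f"
  using addH[of "dm C f" "cd C f"] by (auto simp: Hom_iff)

lemma pls_comm: "f \<in> ar C \<Longrightarrow> g \<in> ar C \<Longrightarrow> dm C g = dm C f \<Longrightarrow> cd C g = cd C f \<Longrightarrow> pls C f g = pls C g f"
  using addH[of "dm C f" "cd C f"] by (auto simp: Hom_iff)

lemma pls_zro_l[simp]: "f \<in> ar C \<Longrightarrow> A = dm C f \<Longrightarrow> B = cd C f \<Longrightarrow> pls C (zro C A B) f = f"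
  by (subst pls_comm) auto

lemma pls_assoc: "f \<in> ar C \<Longrightarrow> g \<in> ar C \<Longrightarrow> h \<in> ar C \<Longrightarrow> dm C g = dm C f \<Longrightarrow> cd C g = cd C f \<Longrightarrow>
   dm C h = dm C f \<Longrightarrow> cd C h = cd C f \<Longrightarrow> pls C (pls C f g) h = pls C f (pls C g h)"
  using addH[of "dm C f" "cd C f"] by (auto simp: Hom_iff)

lemma pls_ngt[simp]: "f \<in> ar C \<Longrightarrow> pls C f (ngt C f) = zro C (dm C f) (cd C f)"
  using addH[of "dm C f" "cd C f"] by (auto simp: Hom_iff)

lemma cmp_pls_l[simp]: "f \<in> ar C \<Longrightarrow> g \<in> ar C \<Longrightarrow> g' \<in> ar C \<Longrightarrow> dm C g' = dm C g \<Longrightarrow> cd C g' = cd C g \<Longrightarrow>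
   cd C f = dm C g \<Longrightarrow> cmp C (pls C g g') f = pls C (cmp C g f) (cmp C g' f)"
  using bilin[of "dm C f" "cd C f" "cd C g"] by (auto simp: Hom_iff)

lemma cmp_pls_r[simp]: "f \<in> ar C \<Longrightarrow> f' \<in> ar C \<Longrightarrow> g \<in> ar C \<Longrightarrow> dm C f' = dm C f \<Longrightarrow> cd C f' = cd C f \<Longrightarrow>
   cd C f = dm C g \<Longrightarrow> cmp C g (pls C f f') = pls C (cmp C g f) (cmp C g f')"
  using bilin[of "dm C f" "cd C f" "cd C g"] by (auto simp: Hom_iff)

lemma pls_cancel: "f \<in> ar C \<Longrightarrow> pls C f f = f \<Longrightarrow> f = zro C (dm C f) (cd C f)"
proof -
  assume f: "f \<in> ar C" and ff: "pls C f f = f"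
  have "pls C f (ngt C f) = pls C (pls C f f) (ngt C f)" using ff by metis
  also have "\<dots> = pls C f (pls C f (ngt C f))" using f by (simp add: pls_assoc del: pls_ngt)
  also have "\<dots> = f" using f by simp
  finally show ?thesis using f by simp
qed

lemma cmp_zro_r[simp]: "g \<in> ar C \<Longrightarrow> A \<in> ob C \<Longrightarrow> B = dm C g \<Longrightarrow> cmp C g (zro C A B) = zro C A (cd C g)"
proof -
  assume g: "g \<in> ar C" and A: "A \<in> ob C" and B: "B = dm C g"
  let ?z = "cmp C g (zro C A B)"
  have "cmp C g (pls C (zro C A B) (zro C A B)) = pls C ?z ?z"
    using g A B by (simp del: pls_zro_r pls_zro_l)
  moreover have "pls C (zro C A B) (zro C A B) = zro C A B" using g A B by simp
  ultimately have "pls C ?z ?z = ?z" by simp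
  hence "?z = zro C (dm C ?z) (cd C ?z)" using g A B by (intro pls_cancel) auto
  thus ?thesis using g A B by simp
qed

lemma cmp_zro_l[simp]: "f \<in> ar C \<Longrightarrow> D \<in> ob C \<Longrightarrow> B = cd C f \<Longrightarrow> cmp C (zro C B D) f = zro C (dm C f) D"
proof -
  assume f: "f \<in> ar C" and D: "D \<in> ob C" and B: "B = cd C f"
  let ?z = "cmp C (zro C B D) f"
  have "cmp C (pls C (zro C B D) (zro C B D)) f = pls C ?z ?z"
    using f D B by (simp del: pls_zro_r pls_zro_l)
  moreover have "pls C (zro C B D) (zro C B D) = zro C B D" using f D B by simp
  ultimately have "pls C ?z ?z = ?z" by simp
  hence "?z = zro C (dm C ?z) (cd C ?z)" using f D B by (intro pls_cancel) auto
  thus ?thesis using f D B by simp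
qed

lemma ngt_ngt[simp]: "f \<in> ar C \<Longrightarrow> ngt C (ngt C f) = f"
proof -
  assume f: "f \<in> ar C"
  let ?g = "ngt C f"
  have "ngt C ?g = pls C (zro C (dm C f) (cd C f)) (ngt C ?g)" using f by simp
  also have "\<dots> = pls C (pls C f ?g) (ngt C ?g)" using f by simp
  also have "\<dots> = pls C f (pls C ?g (ngt C ?g))" using f by (simp add: pls_assoc del: pls_ngt)
  also have "\<dots> = f" using f by simp
  finally show ?thesis .
qed

lemma cmp_cancel: "cmp C g f = k \<Longrightarrow> f \<in> ar C \<Longrightarrow> g \<in> ar C \<Longrightarrow> h \<in> ar C \<Longrightarrow> cd C h = dm C f \<Longrightarrow>
   cd C f = dm C g \<Longrightarrow> cmp C g (cmp C f h) = cmp C k h"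
  by (metis cmp_assoc)

end

context acat
begin

lemma is_biprod_iff: "is_biprod C X A B (p1,p2,i1,i2) \<longleftrightarrow>
   p1 \<in> ar C \<and> dm C p1 = X \<and> cd C p1 = A \<and> p2 \<in> ar C \<and> dm C p2 = X \<and> cd C p2 = B \<and>
   i1 \<in> ar C \<and> dm C i1 = A \<and> cd C i1 = X \<and> i2 \<in> ar C \<and> dm C i2 = B \<and> cd C i2 = X \<and>
     cmp C p1 i1 = idn C A \<and> cmp C p2 i2 = idn C B \<and>
     cmp C p1 i2 = zro C B A \<and> cmp C p2 i1 = zro C A B \<and>
     pls C (cmp C i1 p1) (cmp C i2 p2) = idn C X"
  by (auto simp: is_biprod_def Hom_iff)

lemma biprod_iff: "biprod C X A B \<longleftrightarrow> (\<exists>p1 p2 i1 i2. is_biprod C X A B (p1,p2,i1,i2))"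
  unfolding biprod_def by auto

lemma biprod_ob: "biprod C X A B \<Longrightarrow> X \<in> ob C \<and> A \<in> ob C \<and> B \<in> ob C"
  unfolding biprod_iff is_biprod_iff by (metis dm_ob cd_ob)

lemma biprod_sym: "biprod C X A B \<Longrightarrow> biprod C X B A"
  unfolding biprod_iff is_biprod_iff
  by (metis pls_comm cmp_ar dm_cmp cd_cmp)

lemma iso_obj_iff: "isomorphic_obj C A B \<longleftrightarrow> (\<exists>f g. f \<in> ar C \<and> g \<in> ar C \<and> dm C f = A \<and> cd C f = B \<and>
     dm C g = B \<and> cd C g = A \<and> cmp C g f = idn C A \<and> cmp C f g = idn C B)"
  unfolding isomorphic_obj_def is_iso_arr_def Hom_def by fastforce

lemma iso_ob: "isomorphic_obj C A B \<Longrightarrow> A \<in> ob C \<and> B \<in> ob C"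
  unfolding iso_obj_iff by (metis dm_ob)

lemma iso_refl: "A \<in> ob C \<Longrightarrow> isomorphic_obj C A A"
  unfolding iso_obj_iff by (rule exI[of _ "idn C A"], rule exI[of _ "idn C A"]) simp

lemma iso_sym: "isomorphic_obj C A B \<Longrightarrow> isomorphic_obj C B A"
  unfolding iso_obj_iff by blast

lemma iso_trans: "isomorphic_obj C A B \<Longrightarrow> isomorphic_obj C B D \<Longrightarrow> isomorphic_obj C A D"
proof -
  assume "isomorphic_obj C A B" "isomorphic_obj C B D"
  then obtain f g f' g' where f: "f \<in> ar C" "g \<in> ar C" "dm C f = A" "cd C f = B" "dm C g = B" "cd C g = A"
     "cmp C g f = idn C A" "cmp C f g = idn C B"
    and f': "f' \<in> ar C" "g' \<in> ar C" "dm C f' = B" "cd C f' = D" "dm C g' = D" "cd C g' = B"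
     "cmp C g' f' = idn C B" "cmp C f' g' = idn C D" unfolding iso_obj_iff by blast
  have a: "cmp C g (cmp C g' (cmp C f' f)) = idn C A"
    using f f' by (simp add: cmp_cancel[OF f'(7)])
  have b: "cmp C f' (cmp C f (cmp C g g')) = idn C D"
    using f f' by (simp add: cmp_cancel[OF f(8)])
  show ?thesis unfolding iso_obj_iff
    by (rule exI[of _ "cmp C f' f"], rule exI[of _ "cmp C g (g')"]) (use f f' a b in simp)
qed

lemma zero_to: "is_zero_obj C Z \<Longrightarrow> f \<in> ar C \<Longrightarrow> cd C f = Z \<Longrightarrow> f = zro C (dm C f) Z"
  unfolding is_zero_obj_def by (metis cmp_idn_l cmp_zro_l)

lemma zero_from: "is_zero_obj C Z \<Longrightarrow> f \<in> ar C \<Longrightarrow> dm C f = Z \<Longrightarrow> f = zro C Z (cd C f)"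
  unfolding is_zero_obj_def by (metis cmp_idn_r cmp_zro_r)

lemma zeros_iso: "is_zero_obj C Z \<Longrightarrow> is_zero_obj C Z' \<Longrightarrow> isomorphic_obj C Z Z'"
  unfolding iso_obj_iff
  apply (rule exI[of _ "zro C Z Z'"], rule exI[of _ "zro C Z' Z"])
  by (auto simp: is_zero_obj_def)

lemma biprod_zero: "A \<in> ob C \<Longrightarrow> is_zero_obj C Z \<Longrightarrow> biprod C A A Z"
  unfolding biprod_iff is_biprod_iff
  apply (rule exI[of _ "idn C A"], rule exI[of _ "zro C A Z"], rule exI[of _ "idn C A"], rule exI[of _ "zro C Z A"])
  by (auto simp: is_zero_obj_def)

lemma biprod_transX: "biprod C X A B \<Longrightarrow> isomorphic_obj C X' X \<Longrightarrow> biprod C X' A B"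
proof -
  assume "biprod C X A B" "isomorphic_obj C X' X"
  then obtain p1 p2 i1 i2 f g where d: "is_biprod C X A B (p1,p2,i1,i2)"
    and f: "f \<in> ar C" "g \<in> ar C" "dm C f = X'" "cd C f = X" "dm C g = X" "cd C g = X'"
     "cmp C g f = idn C X'" "cmp C f g = idn C X" unfolding iso_obj_iff biprod_iff by blast
  note d' = d[unfolded is_biprod_iff]
  have fg: "\<And>h. h \<in> ar C \<Longrightarrow> cd C h = X \<Longrightarrow> cmp C f (cmp C g h) = h"
    using f by (simp add: cmp_cancel[OF f(8)])
  have e: "cmp C g (cmp C (pls C (cmp C i1 p1) (cmp C i2 p2)) f) = idn C X'"
    using d' f by simp
  have e2: "cmp C g (cmp C (pls C (cmp C i1 p1) (cmp C i2 p2)) f) =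
     pls C (cmp C g (cmp C i1 (cmp C p1 f))) (cmp C g (cmp C i2 (cmp C p2 f)))"
    apply (subst cmp_pls_l) using d' f apply (simp_all only: cmp_ar dm_cmp cd_cmp) [6]
    apply (subst cmp_pls_r) using d' f by (simp_all only: cmp_ar dm_cmp cd_cmp cmp_assoc)
  show ?thesis unfolding biprod_iff is_biprod_iff
    apply (rule exI[of _ "cmp C p1 f"], rule exI[of _ "cmp C p2 f"], rule exI[of _ "cmp C g i1"], rule exI[of _ "cmp C g i2"])
    using d' f e2[symmetric] e by (simp add: fg)
qed

lemma biprod_transA: "biprod C X A B \<Longrightarrow> isomorphic_obj C A A' \<Longrightarrow> biprod C X A' B"
proof -
  assume "biprod C X A B" "isomorphic_obj C A A'"
  then obtain p1 p2 i1 i2 f g where d: "is_biprod C X A B (p1,p2,i1,i2)"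
    and f: "f \<in> ar C" "g \<in> ar C" "dm C f = A" "cd C f = A'" "dm C g = A'" "cd C g = A"
     "cmp C g f = idn C A" "cmp C f g = idn C A'" unfolding iso_obj_iff biprod_iff by blast
  note d' = d[unfolded is_biprod_iff]
  have gf: "\<And>h. h \<in> ar C \<Longrightarrow> cd C h = A \<Longrightarrow> cmp C g (cmp C f h) = h"
    using f by (simp add: cmp_cancel[OF f(7)])
  have ob: "X \<in> ob C" "A \<in> ob C" "B \<in> ob C" "A' \<in> ob C" using d' f by (metis dm_ob cd_ob)+
  have pi: "\<And>h. h \<in> ar C \<Longrightarrow> cd C h = A \<Longrightarrow> cmp C p1 (cmp C i1 h) = h"
     "\<And>h. h \<in> ar C \<Longrightarrow> cd C h = A \<Longrightarrow> cmp C p2 (cmp C i1 h) = zro C (dm C h) B"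
    using d' ob by (simp_all add: cmp_cancel)
  show ?thesis unfolding biprod_iff is_biprod_iff
    apply (rule exI[of _ "cmp C f p1"], rule exI[of _ "p2"], rule exI[of _ "cmp C i1 g"], rule exI[of _ "i2"])
    using d' f ob by (simp add: gf pi)
qed

lemma biprod_transB: "biprod C X A B \<Longrightarrow> isomorphic_obj C B B' \<Longrightarrow> biprod C X A B'"
  by (metis biprod_sym biprod_transA)

lemma biprod_uniq: "biprod C X A B \<Longrightarrow> biprod C Y A B \<Longrightarrow> isomorphic_obj C X Y"
proof -
  assume "biprod C X A B" "biprod C Y A B"
  then obtain p1 p2 i1 i2 q1 q2 j1 j2 where d: "is_biprod C X A B (p1,p2,i1,i2)"
    and e: "is_biprod C Y A B (q1,q2,j1,j2)" unfolding biprod_iff by blast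
  note d' = d[unfolded is_biprod_iff] and e' = e[unfolded is_biprod_iff]
  have ob: "X \<in> ob C" "Y \<in> ob C" "A \<in> ob C" "B \<in> ob C" using d' e' by (metis dm_ob cd_ob)+
  have c: "\<And>h. h \<in> ar C \<Longrightarrow> cd C h = A \<Longrightarrow> cmp C p1 (cmp C i1 h) = h"
     "\<And>h. h \<in> ar C \<Longrightarrow> cd C h = B \<Longrightarrow> cmp C p2 (cmp C i2 h) = h"
     "\<And>h. h \<in> ar C \<Longrightarrow> cd C h = A \<Longrightarrow> cmp C q1 (cmp C j1 h) = h"
     "\<And>h. h \<in> ar C \<Longrightarrow> cd C h = B \<Longrightarrow> cmp C q2 (cmp C j2 h) = h"
     "\<And>h. h \<in> ar C \<Longrightarrow> cd C h = B \<Longrightarrow> cmp C p1 (cmp C i2 h) = zro C (dm C h) A"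
     "\<And>h. h \<in> ar C \<Longrightarrow> cd C h = A \<Longrightarrow> cmp C p2 (cmp C i1 h) = zro C (dm C h) B"
     "\<And>h. h \<in> ar C \<Longrightarrow> cd C h = B \<Longrightarrow> cmp C q1 (cmp C j2 h) = zro C (dm C h) A"
     "\<And>h. h \<in> ar C \<Longrightarrow> cd C h = A \<Longrightarrow> cmp C q2 (cmp C j1 h) = zro C (dm C h) B"
    using d' e' ob by (simp_all add: cmp_cancel)
  let ?f = "pls C (cmp C j1 p1) (cmp C j2 p2)" and ?g = "pls C (cmp C i1 q1) (cmp C i2 q2)"
  have 1: "cmp C ?g ?f = pls C (cmp C i1 p1) (cmp C i2 p2)"
    using d' e' ob by (simp add: c)
  have 2: "cmp C ?f ?g = pls C (cmp C j1 q1) (cmp C j2 q2)"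
    using d' e' ob by (simp add: c)
  show ?thesis unfolding iso_obj_iff
    by (rule exI[of _ ?f], rule exI[of _ ?g]) (use d' e' 1 2 in simp)
qed

end

context acat
begin

lemma biprod_assoc:
  assumes "biprod C W D1 D2" "biprod C D1 A B" "biprod C Y B D2"
  shows "biprod C W A Y"
proof -
  obtain p1 p2 i1 i2 q1 q2 j1 j2 r1 r2 k1 k2 where d: "is_biprod C W D1 D2 (p1,p2,i1,i2)"
    and e: "is_biprod C D1 A B (q1,q2,j1,j2)" and f: "is_biprod C Y B D2 (r1,r2,k1,k2)"
    using assms unfolding biprod_iff by blast
  note d' = d[unfolded is_biprod_iff] and e' = e[unfolded is_biprod_iff] and f' = f[unfolded is_biprod_iff]
  have ob: "W \<in> ob C" "D1 \<in> ob C" "D2 \<in> ob C" "A \<in> ob C" "B \<in> ob C" "Y \<in> ob C"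
    using d' e' f' by (metis dm_ob cd_ob)+
  have c: "\<And>h. h \<in> ar C \<Longrightarrow> cd C h = D1 \<Longrightarrow> cmp C p1 (cmp C i1 h) = h"
     "\<And>h. h \<in> ar C \<Longrightarrow> cd C h = D2 \<Longrightarrow> cmp C p2 (cmp C i2 h) = h"
     "\<And>h. h \<in> ar C \<Longrightarrow> cd C h = D2 \<Longrightarrow> cmp C p1 (cmp C i2 h) = zro C (dm C h) D1"
     "\<And>h. h \<in> ar C \<Longrightarrow> cd C h = D1 \<Longrightarrow> cmp C p2 (cmp C i1 h) = zro C (dm C h) D2"
     "\<And>h. h \<in> ar C \<Longrightarrow> cd C h = A \<Longrightarrow> cmp C q1 (cmp C j1 h) = h"
     "\<And>h. h \<in> ar C \<Longrightarrow> cd C h = B \<Longrightarrow> cmp C q2 (cmp C j2 h) = h"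
     "\<And>h. h \<in> ar C \<Longrightarrow> cd C h = B \<Longrightarrow> cmp C q1 (cmp C j2 h) = zro C (dm C h) A"
     "\<And>h. h \<in> ar C \<Longrightarrow> cd C h = A \<Longrightarrow> cmp C q2 (cmp C j1 h) = zro C (dm C h) B"
     "\<And>h. h \<in> ar C \<Longrightarrow> cd C h = B \<Longrightarrow> cmp C r1 (cmp C k1 h) = h"
     "\<And>h. h \<in> ar C \<Longrightarrow> cd C h = D2 \<Longrightarrow> cmp C r2 (cmp C k2 h) = h"
     "\<And>h. h \<in> ar C \<Longrightarrow> cd C h = D2 \<Longrightarrow> cmp C r1 (cmp C k2 h) = zro C (dm C h) B"
     "\<And>h. h \<in> ar C \<Longrightarrow> cd C h = B \<Longrightarrow> cmp C r2 (cmp C k1 h) = zro C (dm C h) D2"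
    using d' e' f' ob by (simp_all add: cmp_cancel)
  let ?P1 = "cmp C q1 p1" and ?P2 = "pls C (cmp C k1 (cmp C q2 p1)) (cmp C k2 p2)"
  let ?I1 = "cmp C i1 j1" and ?I2 = "pls C (cmp C i1 (cmp C j2 r1)) (cmp C i2 r2)"
  have 1: "cmp C ?P1 ?I1 = idn C A" using d' e' f' ob by (simp add: c)
  have 2: "cmp C ?P2 ?I2 = pls C (cmp C k1 r1) (cmp C k2 r2)" using d' e' f' ob by (simp add: c)
  have 3: "cmp C ?P1 ?I2 = zro C Y A" using d' e' f' ob by (simp add: c)
  have 4: "cmp C ?P2 ?I1 = zro C A Y" using d' e' f' ob by (simp add: c)
  have 5: "cmp C ?I1 ?P1 = cmp C i1 (cmp C (cmp C j1 q1) p1)" using d' e' f' ob by (simp add: c)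
  have 6: "cmp C ?I2 ?P2 = pls C (cmp C i1 (cmp C (cmp C j2 q2) p1)) (cmp C i2 p2)"
    using d' e' f' ob by (simp add: c)
  have 7: "pls C (cmp C i1 (cmp C (cmp C j1 q1) p1)) (cmp C i1 (cmp C (cmp C j2 q2) p1)) = cmp C i1 p1"
  proof -
    have "cmp C i1 (cmp C (pls C (cmp C j1 q1) (cmp C j2 q2)) p1) =
       pls C (cmp C i1 (cmp C (cmp C j1 q1) p1)) (cmp C i1 (cmp C (cmp C j2 q2) p1))"
      apply (subst cmp_pls_l) using d' e' apply (simp_all only: cmp_ar dm_cmp cd_cmp) [6]
      apply (subst cmp_pls_r) using d' e' by (simp_all only: cmp_ar dm_cmp cd_cmp)
    moreover have "cmp C i1 (cmp C (pls C (cmp C j1 q1) (cmp C j2 q2)) p1) = cmp C i1 p1"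
      using d' e' by simp
    ultimately show ?thesis by simp
  qed
  have 8: "pls C (cmp C ?I1 ?P1) (cmp C ?I2 ?P2) = idn C W"
    unfolding 5 6
    apply (subst pls_assoc[symmetric]) using d' e' f' apply (simp_all only: cmp_ar dm_cmp cd_cmp pls_ar dm_pls cd_pls) [7]
    unfolding 7 using d' by simp
  show ?thesis unfolding biprod_iff is_biprod_iff
    apply (rule exI[of _ ?P1], rule exI[of _ ?P2], rule exI[of _ ?I1], rule exI[of _ ?I2])
    apply (intro conjI)
    using d' e' f' ob 1 2 3 4 8 by (simp_all del: cmp_pls_l cmp_pls_r cmp_assoc)
qed

lemma biprod_cong: "biprod C X A B \<Longrightarrow> biprod C Y A' B' \<Longrightarrow> isomorphic_obj C A A' \<Longrightarrow>
   isomorphic_obj C B B' \<Longrightarrow> isomorphic_obj C X Y"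
  by (meson biprod_transA biprod_transB biprod_uniq)

lemma biprod_zero_iso: "biprod C X A Z \<Longrightarrow> is_zero_obj C Z \<Longrightarrow> isomorphic_obj C X A"
  by (meson biprod_zero biprod_uniq biprod_ob)

end

locale nang = acat C for C :: "('o, 'm) addcat" +
  fixes n :: nat and So :: "'o \<Rightarrow> 'o" and Sm :: "'m \<Rightarrow> 'm" and N :: "('o, 'm) nseq set"
  assumes odd_n: "odd n" and NA: "n_angulated n C So Sm N"
begin

lemmas NA_c = NA[unfolded n_angulated_def]
lemmas NA_aut = NA_c[THEN conjunct2, THEN conjunct2, THEN conjunct1]
lemmas NA_seq = NA_c[THEN conjunct2, THEN conjunct2, THEN conjunct2, THEN conjunct1]
lemmas NA_sum = NA_c[THEN conjunct2, THEN conjunct2, THEN conjunct2, THEN conjunct2, THEN conjunct1]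
lemmas NA_iso = NA_c[THEN conjunct2, THEN conjunct2, THEN conjunct2, THEN conjunct2, THEN conjunct2, THEN conjunct1]
lemmas NA_triv = NA_c[THEN conjunct2, THEN conjunct2, THEN conjunct2, THEN conjunct2, THEN conjunct2, THEN conjunct2, THEN conjunct1]
lemmas NA_rot = NA_c[THEN conjunct2, THEN conjunct2, THEN conjunct2, THEN conjunct2, THEN conjunct2, THEN conjunct2, THEN conjunct2, THEN conjunct2, THEN conjunct1]
lemmas NA_4 = NA_c[THEN conjunct2, THEN conjunct2, THEN conjunct2, THEN conjunct2, THEN conjunct2, THEN conjunct2, THEN conjunct2, THEN conjunct2, THEN conjunct2, THEN conjunct2]

lemma n3: "3 \<le> n" using NA_c by (rule conjunct1)
lemma aut: "is_automorphism C So Sm" by (rule NA_aut)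
lemma N_nseq: "S \<in> N \<Longrightarrow> is_nseq n C So S" using NA_seq by blast
lemma N_sum: "is_nseq n C So U \<Longrightarrow> is_nseq n C So S \<Longrightarrow> is_nseq n C So T \<Longrightarrow> is_nseq_sum n C Sm U S T
        \<Longrightarrow> (U \<in> N \<longleftrightarrow> S \<in> N \<and> T \<in> N)" using NA_sum by blast
lemma N_iso: "is_nseq n C So S \<Longrightarrow> T \<in> N \<Longrightarrow> is_nseq_iso n C Sm S T phi \<Longrightarrow> S \<in> N"
  using NA_iso by blast
lemma N_triv: "A \<in> ob C \<Longrightarrow> is_zero_obj C Z \<Longrightarrow> trivial_nseq n C So A Z \<in> N"
  using NA_triv by blast
lemma N_rot: "is_nseq n C So S \<Longrightarrow> (S \<in> N \<longleftrightarrow> rotate_nseq n C So Sm S \<in> N)"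
  using NA_rot by blast
lemma N4: "S \<in> N \<Longrightarrow> T \<in> N \<Longrightarrow>
        f0 \<in> Hom C (fst S ! 0) (fst T ! 0) \<Longrightarrow> f1 \<in> Hom C (fst S ! 1) (fst T ! 1) \<Longrightarrow>
        cmp C (snd T ! 0) f0 = cmp C f1 (snd S ! 0) \<Longrightarrow>
        (\<exists>phi. phi ! 0 = f0 \<and> phi ! 1 = f1 \<and> is_nseq_morph n C Sm S T phi \<and>
               (\<exists>Cn\<in>N. is_mapping_cone n C So Sm S T phi Cn))"
  using NA_4 by blast

lemma So_bij: "bij_betw So (ob C) (ob C)" using aut unfolding is_automorphism_def by blast
lemma Sm_bij: "bij_betw Sm (ar C) (ar C)" using aut unfolding is_automorphism_def by blast
lemma So_ob[simp]: "A \<in> ob C \<Longrightarrow> So A \<in> ob C" using So_bij bij_betwE by blast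
lemma Sm_Hom: "f \<in> ar C \<Longrightarrow> Sm f \<in> Hom C (So (dm C f)) (So (cd C f))"
proof -
  assume f: "f \<in> ar C"
  have "\<forall>A\<in>ob C. \<forall>B\<in>ob C. \<forall>f\<in>Hom C A B. Sm f \<in> Hom C (So A) (So B)"
    using aut unfolding is_automorphism_def by blast
  moreover have "f \<in> Hom C (dm C f) (cd C f)" using f by (simp add: Hom_iff)
  ultimately show ?thesis using dm_ob[OF f] cd_ob[OF f] by blast
qed
lemma Sm_ar[simp]: "f \<in> ar C \<Longrightarrow> Sm f \<in> ar C"
  and dm_Sm[simp]: "f \<in> ar C \<Longrightarrow> dm C (Sm f) = So (dm C f)"
  and cd_Sm[simp]: "f \<in> ar C \<Longrightarrow> cd C (Sm f) = So (cd C f)"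
  using Sm_Hom unfolding Hom_iff by blast+
lemma Sm_idn[simp]: "A \<in> ob C \<Longrightarrow> Sm (idn C A) = idn C (So A)"
  using aut unfolding is_automorphism_def by blast
lemma Sm_cmp[simp]: "f \<in> ar C \<Longrightarrow> g \<in> ar C \<Longrightarrow> cd C f = dm C g \<Longrightarrow> Sm (cmp C g f) = cmp C (Sm g) (Sm f)"
  using aut unfolding is_automorphism_def by blast
lemma Sm_pls: "f \<in> ar C \<Longrightarrow> g \<in> ar C \<Longrightarrow> dm C g = dm C f \<Longrightarrow> cd C g = cd C f \<Longrightarrow> Sm (pls C f g) = pls C (Sm f) (Sm g)"
proof -
  assume f: "f \<in> ar C" "g \<in> ar C" "dm C g = dm C f" "cd C g = cd C f"
  have "\<forall>A\<in>ob C. \<forall>B\<in>ob C. \<forall>f\<in>Hom C A B. \<forall>g\<in>Hom C A B. Sm (pls C f g) = pls C (Sm f) (Sm g)"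
    using aut unfolding is_automorphism_def by blast
  moreover have "f \<in> Hom C (dm C f) (cd C f)" "g \<in> Hom C (dm C f) (cd C f)" using f by (simp_all add: Hom_iff)
  ultimately show ?thesis using dm_ob[OF f(1)] cd_ob[OF f(1)] by blast
qed

lemma Sm_zro[simp]: "A \<in> ob C \<Longrightarrow> B \<in> ob C \<Longrightarrow> Sm (zro C A B) = zro C (So A) (So B)"
proof -
  assume A: "A \<in> ob C" and B: "B \<in> ob C"
  let ?z = "Sm (zro C A B)"
  have "pls C ?z ?z = Sm (pls C (zro C A B) (zro C A B))" using A B by (simp add: Sm_pls del: pls_zro_r pls_zro_l)
  also have "\<dots> = ?z" using A B by simp
  finally have "?z = zro C (dm C ?z) (cd C ?z)" using A B by (intro pls_cancel) auto
  thus ?thesis using A B by simp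
qed

definition Soi :: "'o \<Rightarrow> 'o" where "Soi = inv_into (ob C) So"

lemma Soi_ob[simp]: "B \<in> ob C \<Longrightarrow> Soi B \<in> ob C"
  unfolding Soi_def using So_bij by (simp add: bij_betw_def inv_into_into)
lemma So_Soi[simp]: "B \<in> ob C \<Longrightarrow> So (Soi B) = B"
  unfolding Soi_def by (rule bij_betw_inv_into_right[OF So_bij])
lemma Soi_So[simp]: "A \<in> ob C \<Longrightarrow> Soi (So A) = A"
  unfolding Soi_def by (rule bij_betw_inv_into_left[OF So_bij])
lemma So_inj: "A \<in> ob C \<Longrightarrow> B \<in> ob C \<Longrightarrow> So A = So B \<Longrightarrow> A = B"
  using Soi_So by metis

lemma Sm_surj: "g \<in> ar C \<Longrightarrow> \<exists>f\<in>ar C. Sm f = g"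
proof -
  assume "g \<in> ar C" hence "g \<in> Sm ` ar C" using Sm_bij by (simp add: bij_betw_def)
  thus ?thesis by auto
qed
lemma Sm_inj: "f \<in> ar C \<Longrightarrow> g \<in> ar C \<Longrightarrow> Sm f = Sm g \<Longrightarrow> f = g"
  using Sm_bij unfolding bij_betw_def inj_on_def by blast

lemma Sm_pre: "g \<in> ar C \<Longrightarrow> A \<in> ob C \<Longrightarrow> B \<in> ob C \<Longrightarrow> dm C g = So A \<Longrightarrow> cd C g = So B \<Longrightarrow>
   \<exists>f. f \<in> ar C \<and> dm C f = A \<and> cd C f = B \<and> Sm f = g"
proof -
  assume a: "g \<in> ar C" "A \<in> ob C" "B \<in> ob C" "dm C g = So A" "cd C g = So B"
  obtain f where f: "f \<in> ar C" "Sm f = g" using Sm_surj a(1) by blast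
  have "So (dm C f) = So A" "So (cd C f) = So B" using f a by (auto simp del: dm_Sm cd_Sm simp add: dm_Sm[symmetric] cd_Sm[symmetric])
  hence "dm C f = A" "cd C f = B" using f a So_inj by simp_all
  thus ?thesis using f by blast
qed

lemma zero_So: "is_zero_obj C Z \<Longrightarrow> is_zero_obj C (So Z)"
proof -
  assume z: "is_zero_obj C Z"
  hence Z: "Z \<in> ob C" "idn C Z = zro C Z Z" by (simp_all add: is_zero_obj_def)
  have "idn C (So Z) = Sm (idn C Z)" by (rule Sm_idn[OF Z(1), symmetric])
  also have "\<dots> = zro C (So Z) (So Z)" using Z by simp
  finally show ?thesis using Z by (simp add: is_zero_obj_def)
qed

lemma zero_Soi: "is_zero_obj C Z \<Longrightarrow> is_zero_obj C (Soi Z)"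
proof -
  assume z: "is_zero_obj C Z"
  hence Z: "Z \<in> ob C" by (simp add: is_zero_obj_def)
  let ?W = "Soi Z"
  have W: "?W \<in> ob C" using Z by simp
  have zz: "idn C Z = zro C Z Z" using z by (simp add: is_zero_obj_def)
  have "Sm (idn C ?W) = idn C Z" using W Sm_idn[OF W] Z by simp
  also have "\<dots> = Sm (zro C ?W ?W)" using zz Sm_zro[OF W W] Z by simp
  finally have "Sm (idn C ?W) = Sm (zro C ?W ?W)" .
  hence "idn C ?W = zro C ?W ?W" using Sm_inj[OF idn_ar[OF W] zro_ar[OF W W]] by blast
  thus ?thesis using Z by (simp add: is_zero_obj_def)
qed

definition Z0 :: 'o where "Z0 = (SOME Z. is_zero_obj C Z)"
lemma Z0: "is_zero_obj C Z0"
  unfolding Z0_def by (rule someI_ex) (use additive in \<open>auto simp: is_additive_def\<close>)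
lemma Z0_ob[simp]: "Z0 \<in> ob C" using Z0 by (simp add: is_zero_obj_def)

lemma is_nseq_iff: "is_nseq n C So (X, a) \<longleftrightarrow> length X = n \<and> length a = n \<and> set X \<subseteq> ob C \<and>
     (\<forall>i. Suc i < n \<longrightarrow> a ! i \<in> ar C \<and> dm C (a ! i) = X ! i \<and> cd C (a ! i) = X ! Suc i) \<and>
     a ! (n - 1) \<in> ar C \<and> dm C (a ! (n - 1)) = X ! (n - 1) \<and> cd C (a ! (n - 1)) = So (X ! 0)"
  by (simp add: is_nseq_def Hom_iff)

definition Nobj :: "'o list \<Rightarrow> bool" where "Nobj L \<longleftrightarrow> (\<exists>a. (L, a) \<in> N)"

lemma Nobj_len: "Nobj L \<Longrightarrow> length L = n"
  and Nobj_ob: "Nobj L \<Longrightarrow> set L \<subseteq> ob C"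
  unfolding Nobj_def using N_nseq is_nseq_iff by blast+

lemma Nobj_nth_ob: "Nobj L \<Longrightarrow> i < n \<Longrightarrow> L ! i \<in> ob C"
  using Nobj_len Nobj_ob nth_mem by blast

end

context nang
begin

lemma n2: "2 \<le> n" using n3 by simp

lemma Nobj_triv: "A \<in> ob C \<Longrightarrow> is_zero_obj C Z \<Longrightarrow> Nobj (A # A # replicate (n - 2) Z)"
  unfolding Nobj_def using N_triv[of A Z] unfolding trivial_nseq_def by blast

lemma Nobj_rot: "Nobj L \<Longrightarrow> Nobj (tl L @ [So (hd L)])"
proof -
  assume "Nobj L"
  then obtain a where a: "(L, a) \<in> N" unfolding Nobj_def by blast
  hence "rotate_nseq n C So Sm (L, a) \<in> N" using N_rot N_nseq by blast
  thus ?thesis unfolding rotate_nseq_def Nobj_def by auto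
qed

lemma Nobj_unrot: "Nobj L \<Longrightarrow> Nobj (Soi (last L) # butlast L)"
proof -
  assume "Nobj L"
  then obtain a where a: "(L, a) \<in> N" unfolding Nobj_def by blast
  have s: "is_nseq n C So (L, a)" using N_nseq a by blast
  note s' = s[unfolded is_nseq_iff]
  have len: "length L = n" "length a = n" using s' by auto
  have Lne: "L \<noteq> []" "a \<noteq> []" using len n3 by auto
  have lastL: "last L = L ! (n - 1)" using len Lne by (simp add: last_conv_nth)
  have lasta: "last a = a ! (n - 1)" using len Lne by (simp add: last_conv_nth)
  have obL: "\<And>i. i < n \<Longrightarrow> L ! i \<in> ob C" using s' len nth_mem by blast
  let ?Y = "L ! (n - 1)"
  have Y: "?Y \<in> ob C" using obL n3 by simp
  have an: "a ! (n - 1) \<in> ar C" "dm C (a ! (n - 1)) = ?Y" "cd C (a ! (n - 1)) = So (L ! 0)" using s' by auto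
  obtain f where f: "f \<in> ar C" "dm C f = Soi ?Y" "cd C f = L ! 0" "Sm f = ngt C (a ! (n - 1))"
    using Sm_pre[of "ngt C (a ! (n - 1))" "Soi ?Y" "L ! 0"] an Y obL n3 by auto
  let ?X = "Soi ?Y # butlast L" and ?b = "f # butlast a"
  have bl: "butlast L @ [?Y] = L" "butlast a @ [a ! (n - 1)] = a"
    using append_butlast_last_id[OF Lne(1)] append_butlast_last_id[OF Lne(2)] lastL lasta by simp_all
  have rot: "rotate_nseq n C So Sm (?X, ?b) = (L, a)"
    unfolding rotate_nseq_def using odd_n f an Y bl by simp
  have H1: "length ?X = n" "length ?b = n" using len n3 by auto
  have H2: "set ?X \<subseteq> ob C" using s' Y by (auto dest: in_set_butlastD)
  have H3: "?b ! i \<in> ar C \<and> dm C (?b ! i) = ?X ! i \<and> cd C (?b ! i) = ?X ! Suc i" if i: "Suc i < n" for i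
  proof (cases i)
    case 0 thus ?thesis using f len n3 by (simp add: nth_butlast)
  next
    case (Suc j)
    have "a ! j \<in> ar C \<and> dm C (a ! j) = L ! j \<and> cd C (a ! j) = L ! Suc j" using s' i Suc by auto
    thus ?thesis using Suc i len by (simp add: nth_butlast)
  qed
  have H4: "?b ! (n - 1) \<in> ar C \<and> dm C (?b ! (n - 1)) = ?X ! (n - 1) \<and> cd C (?b ! (n - 1)) = So (?X ! 0)"
  proof -
    have e: "n - 1 = Suc (n - 2)" using n3 by simp
    have "a ! (n - 2) \<in> ar C \<and> dm C (a ! (n - 2)) = L ! (n - 2) \<and> cd C (a ! (n - 2)) = L ! Suc (n - 2)"
      using s' n3 by auto
    moreover have "Suc (n - 2) = n - 1" using n3 by simp
    ultimately show ?thesis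
      using len n3 Y by (simp add: e nth_butlast numeral_2_eq_2)
  qed
  have sX: "is_nseq n C So (?X, ?b)"
    unfolding is_nseq_iff using H1 H2 H3 H4 by blast
  have "(?X, ?b) \<in> N" using N_rot[OF sX] rot a by simp
  moreover have "last L = ?Y" using lastL .
  ultimately show ?thesis unfolding Nobj_def by auto
qed

lemma Nobj_iso:
  assumes L: "Nobj L" and len': "length L' = n" and iso: "\<forall>i<n. isomorphic_obj C (L' ! i) (L ! i)"
  shows "Nobj L'"
proof -
  obtain a where a: "(L, a) \<in> N" using L unfolding Nobj_def by blast
  have s: "is_nseq n C So (L, a)" using N_nseq a by blast
  note s' = s[unfolded is_nseq_iff]
  have len: "length L = n" "length a = n" using s' by auto
  have "\<forall>i. \<exists>p. i < n \<longrightarrow> (fst p \<in> ar C \<and> snd p \<in> ar C \<and> dm C (fst p) = L' ! i \<and> cd C (fst p) = L ! i \<and>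
     dm C (snd p) = L ! i \<and> cd C (snd p) = L' ! i \<and> cmp C (snd p) (fst p) = idn C (L' ! i) \<and>
     cmp C (fst p) (snd p) = idn C (L ! i))"
  proof
    fix i show "\<exists>p. i < n \<longrightarrow> (fst p \<in> ar C \<and> snd p \<in> ar C \<and> dm C (fst p) = L' ! i \<and> cd C (fst p) = L ! i \<and>
     dm C (snd p) = L ! i \<and> cd C (snd p) = L' ! i \<and> cmp C (snd p) (fst p) = idn C (L' ! i) \<and>
     cmp C (fst p) (snd p) = idn C (L ! i))"
    proof (cases "i < n")
      case True
      then obtain f g where "f \<in> ar C \<and> g \<in> ar C \<and> dm C f = L' ! i \<and> cd C f = L ! i \<and>
        dm C g = L ! i \<and> cd C g = L' ! i \<and> cmp C g f = idn C (L' ! i) \<and> cmp C f g = idn C (L ! i)"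
        using iso unfolding iso_obj_iff by blast
      thus ?thesis by (intro exI[of _ "(f, g)"]) simp
    qed simp
  qed
  from choice[OF this] obtain FG where FG: "\<forall>i. i < n \<longrightarrow> (fst (FG i) \<in> ar C \<and> snd (FG i) \<in> ar C \<and> dm C (fst (FG i)) = L' ! i \<and> cd C (fst (FG i)) = L ! i \<and>
     dm C (snd (FG i)) = L ! i \<and> cd C (snd (FG i)) = L' ! i \<and> cmp C (snd (FG i)) (fst (FG i)) = idn C (L' ! i) \<and>
     cmp C (fst (FG i)) (snd (FG i)) = idn C (L ! i))" by blast
  define F where "F i = fst (FG i)" for i
  define G where "G i = snd (FG i)" for i
  have FGi: "\<And>i. i < n \<Longrightarrow> F i \<in> ar C \<and> G i \<in> ar C \<and> dm C (F i) = L' ! i \<and> cd C (F i) = L ! i \<and>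
     dm C (G i) = L ! i \<and> cd C (G i) = L' ! i \<and> cmp C (G i) (F i) = idn C (L' ! i) \<and>
     cmp C (F i) (G i) = idn C (L ! i)" using FG unfolding F_def G_def by blast
  have canc: "\<And>i h. i < n \<Longrightarrow> h \<in> ar C \<Longrightarrow> cd C h = L ! i \<Longrightarrow> cmp C (F i) (cmp C (G i) h) = h"
  proof -
    fix i h assume "i < n" "h \<in> ar C" "cd C h = L ! i"
    thus "cmp C (F i) (cmp C (G i) h) = h" using FGi[of i] cmp_cancel[of "F i" "G i" "idn C (L ! i)" h]
      by simp
  qed
  have obL: "\<And>i. i < n \<Longrightarrow> L ! i \<in> ob C" using s' len nth_mem by blast
  have obL': "\<And>i. i < n \<Longrightarrow> L' ! i \<in> ob C" using FGi dm_ob by metis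
  have canc0: "\<And>h. h \<in> ar C \<Longrightarrow> cd C h = So (L ! 0) \<Longrightarrow> cmp C (Sm (F 0)) (cmp C (Sm (G 0)) h) = h"
  proof -
    fix h assume h: "h \<in> ar C" "cd C h = So (L ! 0)"
    have 0: "0 < n" using n3 by simp
    have "cmp C (Sm (F 0)) (Sm (G 0)) = idn C (So (L ! 0))"
      using FGi[OF 0] obL[OF 0] Sm_cmp[of "G 0" "F 0"] by simp
    thus "cmp C (Sm (F 0)) (cmp C (Sm (G 0)) h) = h"
      using FGi[OF 0] h cmp_cancel[of "Sm (F 0)" "Sm (G 0)" "idn C (So (L ! 0))" h] by simp
  qed
  define b where "b = map (\<lambda>i. if Suc i < n then cmp C (G (Suc i)) (cmp C (a ! i) (F i))
      else cmp C (Sm (G 0)) (cmp C (a ! i) (F i))) [0..<n]"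
  have bi: "\<And>i. Suc i < n \<Longrightarrow> b ! i = cmp C (G (Suc i)) (cmp C (a ! i) (F i))"
    unfolding b_def by simp
  have bn: "b ! (n - 1) = cmp C (Sm (G 0)) (cmp C (a ! (n - 1)) (F (n - 1)))"
    unfolding b_def using n3 by simp
  have ai: "\<And>i. Suc i < n \<Longrightarrow> a ! i \<in> ar C \<and> dm C (a ! i) = L ! i \<and> cd C (a ! i) = L ! Suc i"
    using s' by blast
  have an: "a ! (n - 1) \<in> ar C" "dm C (a ! (n - 1)) = L ! (n - 1)" "cd C (a ! (n - 1)) = So (L ! 0)"
    using s' by auto
  have n1: "n - 1 < n" "0 < n" using n3 by auto
  have G1: "length L' = n" "length b = n" using len' unfolding b_def by auto
  have G2: "set L' \<subseteq> ob C" using obL' len' by (auto simp: in_set_conv_nth)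
  have G3: "b ! i \<in> ar C \<and> dm C (b ! i) = L' ! i \<and> cd C (b ! i) = L' ! Suc i" if i: "Suc i < n" for i
      using bi[OF i] ai[OF i] FGi[of i] FGi[OF i] i by simp
  have G4: "b ! (n - 1) \<in> ar C \<and> dm C (b ! (n - 1)) = L' ! (n - 1) \<and> cd C (b ! (n - 1)) = So (L' ! 0)"
      unfolding bn using an FGi[OF n1(1)] FGi[OF n1(2)] obL[OF n1(2)] by simp
  have sb: "is_nseq n C So (L', b)"
    unfolding is_nseq_iff using G1 G2 G3 G4 by blast
  have mor: "is_nseq_iso n C Sm (L', b) (L, a) (map F [0..<n])"
    unfolding is_nseq_iso_def is_nseq_morph_def
  proof (simp only: prod.case, intro conjI allI impI)
    show "length (map F [0..<n]) = n" by simp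
  next
    fix i assume i: "i < n"
    show "map F [0..<n] ! i \<in> Hom C (L' ! i) (L ! i)" using FGi[OF i] i by (simp add: Hom_iff)
    show "is_iso_arr C (map F [0..<n] ! i)" unfolding is_iso_arr_def using FGi[OF i] i
      by (auto simp: Hom_iff)
  next
    fix i assume i: "Suc i < n"
    show "cmp C (a ! i) (map F [0..<n] ! i) = cmp C (map F [0..<n] ! Suc i) (b ! i)"
      using i bi[OF i] ai[OF i] FGi[of i] FGi[OF i] canc[OF i] by simp
  next
    show "cmp C (a ! (n - 1)) (map F [0..<n] ! (n - 1)) = cmp C (Sm (map F [0..<n] ! 0)) (b ! (n - 1))"
      unfolding bn using n1 an FGi[OF n1(1)] FGi[OF n1(2)] canc0 obL by simp
  qed
  have "(L', b) \<in> N" using N_iso[OF sb a mor] .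
  thus ?thesis unfolding Nobj_def by blast
qed

end

context nang
begin

lemma Nobj_cone:
  assumes L: "Nobj L" and M: "Nobj M"
  shows "\<exists>D. Nobj D \<and> length D = n \<and> (\<forall>i<n. biprod C (D ! i) (if Suc i < n then L ! Suc i else So (L ! 0)) (M ! i))"
proof -
  obtain a where a: "(L, a) \<in> N" using L unfolding Nobj_def by blast
  obtain b where b: "(M, b) \<in> N" using M unfolding Nobj_def by blast
  note sa = N_nseq[OF a, unfolded is_nseq_iff] and sb = N_nseq[OF b, unfolded is_nseq_iff]
  have ob: "L ! 0 \<in> ob C" "L ! 1 \<in> ob C" "M ! 0 \<in> ob C" "M ! 1 \<in> ob C"
    using Nobj_nth_ob[OF L] Nobj_nth_ob[OF M] n3 by auto
  have a0: "a ! 0 \<in> ar C" "dm C (a ! 0) = L ! 0" "cd C (a ! 0) = L ! 1" using sa n3 by auto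
  have b0: "b ! 0 \<in> ar C" "dm C (b ! 0) = M ! 0" "cd C (b ! 0) = M ! 1" using sb n3 by auto
  have "\<exists>phi. phi ! 0 = zro C (L ! 0) (M ! 0) \<and> phi ! 1 = zro C (L ! 1) (M ! 1) \<and> is_nseq_morph n C Sm (L, a) (M, b) phi \<and>
               (\<exists>Cn\<in>N. is_mapping_cone n C So Sm (L, a) (M, b) phi Cn)"
    using N4[OF a b, of "zro C (L ! 0) (M ! 0)" "zro C (L ! 1) (M ! 1)"] ob a0 b0 by (simp add: Hom_iff)
  then obtain phi Cn where Cn: "Cn \<in> N" "is_mapping_cone n C So Sm (L, a) (M, b) phi Cn" by blast
  obtain D c where Dc: "Cn = (D, c)" by (cases Cn)
  obtain d where d: "length D = n" "\<forall>i<n. is_biprod C (D ! i) (if Suc i < n then L ! Suc i else So (L ! 0)) (M ! i) (d i)"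
    using Cn(2) unfolding is_mapping_cone_def Dc by auto
  have "Nobj D" using Cn(1) Dc unfolding Nobj_def by blast
  thus ?thesis using d unfolding biprod_def by blast
qed

lemma Nobj_sum:
  assumes L: "Nobj L" and M: "Nobj M" and lW: "length W = n" and W: "\<forall>i<n. biprod C (W ! i) (L ! i) (M ! i)"
  shows "Nobj W"
proof -
  let ?L = "Soi (last L) # butlast L"
  have L': "Nobj ?L" using Nobj_unrot[OF L] .
  obtain D where D: "Nobj D" "length D = n" "\<forall>i<n. biprod C (D ! i) (if Suc i < n then ?L ! Suc i else So (?L ! 0)) (M ! i)"
    using Nobj_cone[OF L' M] by blast
  have lenL: "length L = n" using Nobj_len[OF L] .
  have Lne: "L \<noteq> []" using lenL n3 by auto
  have lastL: "last L = L ! (n - 1)" using lenL Lne by (simp add: last_conv_nth)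
  have lastob: "last L \<in> ob C" using Nobj_nth_ob[OF L, of "n - 1"] lastL n3 by simp
  have D': "\<forall>i<n. biprod C (D ! i) (L ! i) (M ! i)"
  proof (intro allI impI)
    fix i assume i: "i < n"
    show "biprod C (D ! i) (L ! i) (M ! i)"
    proof (cases "Suc i < n")
      case True
      have "biprod C (D ! i) (?L ! Suc i) (M ! i)" using D(3)[rule_format, OF i] True by simp
      moreover have "?L ! Suc i = L ! i" using True lenL by (simp add: nth_butlast)
      ultimately show ?thesis by simp
    next
      case False hence "i = n - 1" using i by simp
      thus ?thesis using D(3)[rule_format, OF i] i lastob lastL by simp
    qed
  qed
  have "\<forall>i<n. isomorphic_obj C (W ! i) (D ! i)" using W D' biprod_uniq by blast
  thus ?thesis using Nobj_iso[OF D(1) lW] by blast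
qed

end

context acat
begin

definition bp :: "'o \<Rightarrow> 'o \<Rightarrow> 'o" where "bp A B = (SOME X. biprod C X A B)"

lemma bp: "A \<in> ob C \<Longrightarrow> B \<in> ob C \<Longrightarrow> biprod C (bp A B) A B"
proof -
  assume "A \<in> ob C" "B \<in> ob C"
  hence "\<exists>X\<in>ob C. biprod C X A B" using additive unfolding is_additive_def by blast
  hence "\<exists>X. biprod C X A B" by blast
  thus ?thesis unfolding bp_def by (rule someI_ex)
qed

lemma bp_ob[simp]: "A \<in> ob C \<Longrightarrow> B \<in> ob C \<Longrightarrow> bp A B \<in> ob C"
  using bp biprod_ob by blast

lemma biprod_assoc_iso: "biprod C W D1 D2 \<Longrightarrow> biprod C D1 A B \<Longrightarrow> biprod C V A Y \<Longrightarrow> biprod C Y B D2 \<Longrightarrow>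
   isomorphic_obj C W V"
  using biprod_assoc biprod_uniq by blast

lemma biprod_swap_mid: "biprod C X A U \<Longrightarrow> biprod C U B Cc \<Longrightarrow> biprod C Y B V \<Longrightarrow> biprod C V A Cc \<Longrightarrow>
   isomorphic_obj C X Y"
proof -
  assume h: "biprod C X A U" "biprod C U B Cc" "biprod C Y B V" "biprod C V A Cc"
  have ob: "A \<in> ob C" "B \<in> ob C" "Cc \<in> ob C" using h biprod_ob by blast+
  let ?E = "bp A B"
  let ?R = "bp ?E Cc"
  have E: "biprod C ?E A B" using bp ob by blast
  have R: "biprod C ?R ?E Cc" using bp ob by simp
  have 1: "biprod C ?R A U" using biprod_assoc[OF R E h(2)] .
  have 2: "biprod C ?R B V" using biprod_assoc[OF R biprod_sym[OF E] h(4)] .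
  have "isomorphic_obj C X ?R" using biprod_uniq[OF h(1) 1] .
  moreover have "isomorphic_obj C ?R Y" using biprod_uniq[OF 2 h(3)] .
  ultimately show ?thesis using iso_trans by blast
qed

lemma biprod_interchange:
  assumes "biprod C W D1 D2" "biprod C D1 A Cc" "biprod C D2 B Cc'" "biprod C W' X K" "biprod C X A B" "biprod C K Cc Cc'"
  shows "isomorphic_obj C W W'"
proof -
  have ob: "A \<in> ob C" "B \<in> ob C" "Cc \<in> ob C" "Cc' \<in> ob C" "D2 \<in> ob C" "K \<in> ob C"
    using assms biprod_ob by blast+
  let ?Y1 = "bp Cc D2"
  have Y1: "biprod C ?Y1 Cc D2" using bp ob by blast
  have a1: "biprod C W A ?Y1" using biprod_assoc[OF assms(1) assms(2) Y1] .
  let ?BK = "bp B K"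
  have BK: "biprod C ?BK B K" using bp ob by blast
  have i1: "isomorphic_obj C ?Y1 ?BK"
    using biprod_swap_mid[OF Y1 assms(3) BK assms(6)] .
  let ?V = "bp A ?BK"
  have V: "biprod C ?V A ?BK" using bp ob by simp
  have i2: "isomorphic_obj C W ?V" using biprod_cong[OF a1 V iso_refl[OF ob(1)] i1] .
  have i3: "isomorphic_obj C W' ?V" using biprod_assoc_iso[OF assms(4) assms(5) V BK] .
  show ?thesis using i2 i3 iso_sym iso_trans by blast
qed

end

context nang
begin

abbreviation sr where "sr \<equiv> sim_rel n C N"

lemma sr_ob: "sr A B \<Longrightarrow> A \<in> ob C \<and> B \<in> ob C"
  unfolding sim_rel_def by blast

lemma srI:
  assumes P: "Nobj P" and Q: "Nobj Q" and bP: "biprod C (P ! 0) A C1" and bQ: "biprod C (Q ! 0) B C1"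
    and tl: "\<forall>i. 0 < i \<and> i < n \<longrightarrow> isomorphic_obj C (Q ! i) (P ! i)"
  shows "sr A B"
proof -
  have lP: "length P = n" and lQ: "length Q = n" using Nobj_len P Q by auto
  let ?Q = "Q ! 0 # tl P"
  have l: "length ?Q = n" using lP n3 by simp
  have "\<forall>i<n. isomorphic_obj C (?Q ! i) (Q ! i)"
  proof (intro allI impI)
    fix i assume i: "i < n"
    show "isomorphic_obj C (?Q ! i) (Q ! i)"
    proof (cases i)
      case 0 thus ?thesis using Nobj_nth_ob[OF Q] n3 iso_refl by simp
    next
      case (Suc j)
      have "?Q ! i = P ! i" using Suc lP i by (simp add: nth_tl)
      thus ?thesis using tl i Suc iso_sym by simp
    qed
  qed
  hence Q': "Nobj ?Q" using Nobj_iso[OF Q l] by blast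
  obtain a where a: "(P, a) \<in> N" using P unfolding Nobj_def by blast
  obtain b where b: "(?Q, b) \<in> N" using Q' unfolding Nobj_def by blast
  have Pe: "P = P ! 0 # tl P" using lP n3 by (cases P) auto
  have ob: "A \<in> ob C" "B \<in> ob C" "C1 \<in> ob C" using bP bQ biprod_ob by blast+
  show ?thesis unfolding sim_rel_def
    apply (intro conjI ob(1) ob(2))
    apply (rule exI[of _ C1], rule exI[of _ "tl P"], rule exI[of _ "P ! 0"], rule exI[of _ "Q ! 0"],
           rule exI[of _ a], rule exI[of _ b])
    using ob lP bP bQ a b Pe by simp
qed

lemma srE:
  assumes "sr A B"
  obtains C1 P Q where "Nobj P" "Nobj Q" "biprod C (P ! 0) A C1" "biprod C (Q ! 0) B C1" "tl P = tl Q"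
proof -
  obtain C1 Cs D D' a b where h: "C1 \<in> ob C" "length Cs = n - 1" "biprod C D A C1" "biprod C D' B C1"
    "(D # Cs, a) \<in> N" "(D' # Cs, b) \<in> N" using assms unfolding sim_rel_def by blast
  show ?thesis using that[of "D # Cs" "D' # Cs" C1] h unfolding Nobj_def by auto
qed

lemma tl_eq_nth: "length P = n \<Longrightarrow> length Q = n \<Longrightarrow> tl P = tl Q \<Longrightarrow> 0 < i \<Longrightarrow> i < n \<Longrightarrow> Q ! i = P ! i"
proof -
  assume h: "length P = n" "length Q = n" "tl P = tl Q" "0 < i" "i < n"
  then obtain j where j: "i = Suc j" by (cases i) auto
  have jj: "j < length (tl Q)" "j < length (tl P)" using j h by auto
  have "Q ! i = tl Q ! j" using j nth_tl[OF jj(1)] by simp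
  also have "\<dots> = tl P ! j" using h by simp
  also have "\<dots> = P ! i" using j nth_tl[OF jj(2)] by simp
  finally show ?thesis .
qed

lemma sr_refl: "A \<in> ob C \<Longrightarrow> sr A A"
proof -
  assume A: "A \<in> ob C"
  let ?P = "A # A # replicate (n - 2) Z0"
  have P: "Nobj ?P" using Nobj_triv[OF A Z0] .
  have "\<forall>i. 0 < i \<and> i < n \<longrightarrow> isomorphic_obj C (?P ! i) (?P ! i)"
    using iso_refl Nobj_nth_ob[OF P] by blast
  moreover have "biprod C (?P ! 0) A Z0" using biprod_zero[OF A Z0] by simp
  ultimately show ?thesis using srI[OF P P] by blast
qed

lemma sr_sym: "sr A B \<Longrightarrow> sr B A"
  unfolding sim_rel_def by blast

lemma sr_isoL: "sr A B \<Longrightarrow> isomorphic_obj C A A' \<Longrightarrow> sr A' B"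
proof -
  assume "sr A B" "isomorphic_obj C A A'"
  then obtain C1 P Q where h: "Nobj P" "Nobj Q" "biprod C (P ! 0) A C1" "biprod C (Q ! 0) B C1" "tl P = tl Q"
    and i: "isomorphic_obj C A A'" using srE by blast
  have lP: "length P = n" and lQ: "length Q = n" using Nobj_len h by auto
  have "\<forall>i. 0 < i \<and> i < n \<longrightarrow> isomorphic_obj C (Q ! i) (P ! i)"
  proof (intro allI impI)
    fix i assume i: "0 < i \<and> i < n"
    have "Q ! i = P ! i" using tl_eq_nth[OF lP lQ h(5)] i by blast
    thus "isomorphic_obj C (Q ! i) (P ! i)" using i Nobj_nth_ob[OF h(1)] iso_refl by simp
  qed
  thus ?thesis using srI[OF h(1) h(2) biprod_transA[OF h(3) i] h(4)] by blast
qed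

lemma sr_iso: "isomorphic_obj C A B \<Longrightarrow> sr A B"
proof -
  assume i: "isomorphic_obj C A B"
  have "sr A A" using sr_refl iso_ob[OF i] by blast
  hence "sr B A" using sr_isoL i by blast
  thus ?thesis using sr_sym by blast
qed


end

context acat
begin

lemma biprod_rot3: "biprod C Y A U \<Longrightarrow> biprod C U B D \<Longrightarrow> biprod C Y' D V \<Longrightarrow> biprod C V B A \<Longrightarrow>
   isomorphic_obj C Y Y'"
proof -
  assume h: "biprod C Y A U" "biprod C U B D" "biprod C Y' D V" "biprod C V B A"
  have ob: "A \<in> ob C" "B \<in> ob C" "D \<in> ob C" using h biprod_ob by blast+
  let ?U = "bp D B" and ?V = "bp A B"
  have U: "biprod C ?U D B" and V: "biprod C ?V A B" using bp ob by blast+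
  have iU: "isomorphic_obj C U ?U" using biprod_uniq[OF biprod_sym[OF h(2)] U] .
  have iV: "isomorphic_obj C V ?V" using biprod_uniq[OF biprod_sym[OF h(4)] V] .
  let ?Y1 = "bp A ?U" and ?Y2 = "bp D ?V"
  have Y1: "biprod C ?Y1 A ?U" and Y2: "biprod C ?Y2 D ?V" using bp ob by simp_all
  have 1: "isomorphic_obj C Y ?Y1" using biprod_cong[OF h(1) Y1 iso_refl[OF ob(1)] iU] .
  have 2: "isomorphic_obj C ?Y1 ?Y2" using biprod_swap_mid[OF Y1 U Y2 V] .
  have 3: "isomorphic_obj C Y' ?Y2" using biprod_cong[OF h(3) Y2 iso_refl[OF ob(3)] iV] .
  show ?thesis using 1 2 3 iso_trans iso_sym by blast
qed

end

context nang
begin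

lemma Nobj_bpsum:
  assumes P: "Nobj P" and P': "Nobj P'"
  shows "Nobj (map (\<lambda>i. bp (P ! i) (P' ! i)) [0..<n])"
proof (rule Nobj_sum[OF P P'])
  show "length (map (\<lambda>i. bp (P ! i) (P' ! i)) [0..<n]) = n" by simp
  show "\<forall>i<n. biprod C (map (\<lambda>i. bp (P ! i) (P' ! i)) [0..<n] ! i) (P ! i) (P' ! i)"
    using bp Nobj_nth_ob[OF P] Nobj_nth_ob[OF P'] by simp
qed

lemma sr_pairs:
  assumes P: "Nobj P" and Q: "Nobj Q" and P': "Nobj P'" and Q': "Nobj Q'" and t: "tl P = tl Q" and t': "tl P' = tl Q'"
    and b1: "biprod C (bp (P ! 0) (P' ! 0)) A K" and b2: "biprod C (bp (Q ! 0) (Q' ! 0)) B K"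
  shows "sr A B"
proof -
  let ?W = "map (\<lambda>i. bp (P ! i) (P' ! i)) [0..<n]" and ?W' = "map (\<lambda>i. bp (Q ! i) (Q' ! i)) [0..<n]"
  have W: "Nobj ?W" "Nobj ?W'" using Nobj_bpsum P P' Q Q' by blast+
  have l: "length P = n" "length Q = n" "length P' = n" "length Q' = n" using Nobj_len P Q P' Q' by auto
  have "\<forall>i. 0 < i \<and> i < n \<longrightarrow> isomorphic_obj C (?W' ! i) (?W ! i)"
  proof (intro allI impI)
    fix i assume i: "0 < i \<and> i < n"
    have "Q ! i = P ! i" "Q' ! i = P' ! i" using tl_eq_nth[OF l(1) l(2) t] tl_eq_nth[OF l(3) l(4) t'] i by auto
    thus "isomorphic_obj C (?W' ! i) (?W ! i)" using i iso_refl bp_ob Nobj_nth_ob[OF P] Nobj_nth_ob[OF P'] by simp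
  qed
  moreover have "?W ! 0 = bp (P ! 0) (P' ! 0)" "?W' ! 0 = bp (Q ! 0) (Q' ! 0)" using n3 by simp_all
  ultimately show ?thesis using srI[OF W(1) W(2), of A K B] b1 b2 by simp
qed

lemma sr_trans: "sr A B \<Longrightarrow> sr B D \<Longrightarrow> sr A D"
proof -
  assume "sr A B" "sr B D"
  then obtain C1 P Q C2 P' Q' where h: "Nobj P" "Nobj Q" "biprod C (P ! 0) A C1" "biprod C (Q ! 0) B C1" "tl P = tl Q"
    and h': "Nobj P'" "Nobj Q'" "biprod C (P' ! 0) B C2" "biprod C (Q' ! 0) D C2" "tl P' = tl Q'"
    using srE by metis
  have ob: "P ! 0 \<in> ob C" "P' ! 0 \<in> ob C" "Q ! 0 \<in> ob C" "Q' ! 0 \<in> ob C" "C1 \<in> ob C" "C2 \<in> ob C"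
    using h h' biprod_ob by blast+
  let ?W0 = "bp (P ! 0) (P' ! 0)" and ?W1 = "bp (Q ! 0) (Q' ! 0)"
  let ?Y = "bp C1 (P' ! 0)" and ?Y' = "bp C2 (Q ! 0)"
  have Y: "biprod C ?Y C1 (P' ! 0)" and Y': "biprod C ?Y' C2 (Q ! 0)" using bp ob by blast+
  have 1: "biprod C ?W0 A ?Y" using biprod_assoc[OF bp[OF ob(1) ob(2)] h(3) Y] .
  have 2: "biprod C ?W1 D ?Y'" using biprod_assoc[OF biprod_sym[OF bp[OF ob(3) ob(4)]] h'(4) Y'] .
  have i: "isomorphic_obj C ?Y' ?Y" using biprod_rot3[OF Y' h(4) Y h'(3)] .
  show "sr A D" using sr_pairs[OF h(1) h(2) h'(1) h'(2) h(5) h'(5) 1 biprod_transB[OF 2 i]] .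
qed

lemma sr_sum: "sr A A' \<Longrightarrow> sr B B' \<Longrightarrow> biprod C X A B \<Longrightarrow> biprod C X' A' B' \<Longrightarrow> sr X X'"
proof -
  assume a: "sr A A'" "sr B B'" and x: "biprod C X A B" "biprod C X' A' B'"
  obtain C1 P Q where h: "Nobj P" "Nobj Q" "biprod C (P ! 0) A C1" "biprod C (Q ! 0) A' C1" "tl P = tl Q"
    using srE[OF a(1)] by blast
  obtain C2 P' Q' where h': "Nobj P'" "Nobj Q'" "biprod C (P' ! 0) B C2" "biprod C (Q' ! 0) B' C2" "tl P' = tl Q'"
    using srE[OF a(2)] by blast
  have ob: "P ! 0 \<in> ob C" "P' ! 0 \<in> ob C" "Q ! 0 \<in> ob C" "Q' ! 0 \<in> ob C" "C1 \<in> ob C" "C2 \<in> ob C"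
    "X \<in> ob C" "X' \<in> ob C"
    using h h' x biprod_ob by blast+
  let ?K = "bp C1 C2"
  have K: "biprod C ?K C1 C2" using bp ob by blast
  have Kob: "?K \<in> ob C" using ob by simp
  have 1: "isomorphic_obj C (bp (P ! 0) (P' ! 0)) (bp X ?K)"
    using biprod_interchange[OF bp[OF ob(1) ob(2)] h(3) h'(3) bp[OF ob(7) Kob] x(1) K] .
  have 2: "isomorphic_obj C (bp (Q ! 0) (Q' ! 0)) (bp X' ?K)"
    using biprod_interchange[OF bp[OF ob(3) ob(4)] h(4) h'(4) bp[OF ob(8) Kob] x(2) K] .
  have b1: "biprod C (bp (P ! 0) (P' ! 0)) X ?K" using biprod_transX[OF bp[OF ob(7) Kob] 1] .
  have b2: "biprod C (bp (Q ! 0) (Q' ! 0)) X' ?K" using biprod_transX[OF bp[OF ob(8) Kob] 2] .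
  show ?thesis using sr_pairs[OF h(1) h(2) h'(1) h'(2) h(5) h'(5) b1 b2] .
qed

end

context nang
begin

lemma Nobj_eq: "Nobj L \<Longrightarrow> length L' = n \<Longrightarrow> (\<forall>i<n. L' ! i = L ! i) \<Longrightarrow> Nobj L'"
  using Nobj_iso[of L L'] iso_refl Nobj_nth_ob[of L] by simp

definition pairL :: "nat \<Rightarrow> 'o \<Rightarrow> 'o list" where
  "pairL k Y = map (\<lambda>j. if j = k \<or> j = Suc k then Y else Z0) [0..<n]"

lemma Nobj_pair: "k \<le> n - 2 \<Longrightarrow> Y \<in> ob C \<Longrightarrow> Nobj (pairL k Y)"
proof (induction k)
  case 0
  have T: "Nobj (Y # Y # replicate (n - 2) Z0)" using Nobj_triv[OF 0(2) Z0] .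
  show ?case
  proof (rule Nobj_eq[OF T])
    show "length (pairL 0 Y) = n" by (simp add: pairL_def)
    show "\<forall>i<n. pairL 0 Y ! i = (Y # Y # replicate (n - 2) Z0) ! i"
      by (auto simp: pairL_def nth_Cons')
  qed
next
  case (Suc k)
  let ?L = "pairL k Y"
  have L: "Nobj ?L" using Suc by simp
  have lL: "length ?L = n" by (simp add: pairL_def)
  have Lne: "?L \<noteq> []" using lL n3 by auto
  have last: "last ?L = Z0" using Suc(2) n3 lL Lne by (auto simp: last_conv_nth pairL_def)
  have U: "Nobj (Soi Z0 # butlast ?L)" using Nobj_unrot[OF L] last by simp
  show ?case
  proof (rule Nobj_iso[OF U])
    show "length (pairL (Suc k) Y) = n" by (simp add: pairL_def)
    show "\<forall>i<n. isomorphic_obj C (pairL (Suc k) Y ! i) ((Soi Z0 # butlast ?L) ! i)"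
    proof (intro allI impI)
      fix i assume i: "i < n"
      show "isomorphic_obj C (pairL (Suc k) Y ! i) ((Soi Z0 # butlast ?L) ! i)"
      proof (cases i)
        case 0 thus ?thesis using zeros_iso[OF Z0 zero_Soi[OF Z0]] i by (simp add: pairL_def)
      next
        case (Suc j)
        have "(Soi Z0 # butlast ?L) ! i = ?L ! j" using Suc i lL by (simp add: nth_butlast)
        also have "\<dots> = pairL (Suc k) Y ! i" using Suc i by (simp add: pairL_def)
        finally show ?thesis using iso_refl Suc.prems(2) i by (simp add: pairL_def)
      qed
    qed
  qed
qed

definition spec :: "(nat \<Rightarrow> 'o) \<Rightarrow> nat \<Rightarrow> nat \<Rightarrow> 'o" where
  "spec w m j = (if j = 0 then (if m = 0 then Z0 else w 0) else if j < m then bp (w (j - 1)) (w j)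
      else if j = m then w (j - 1) else Z0)"

definition splitL :: "(nat \<Rightarrow> 'o) \<Rightarrow> nat \<Rightarrow> 'o list" where
  "splitL w m = map (spec w m) [0..<n]"

lemma Nobj_split:
  assumes w: "\<And>j. j \<le> n - 2 \<Longrightarrow> w j \<in> ob C"
  shows "m \<le> n - 1 \<Longrightarrow> Nobj (splitL w m)"
proof (induction m)
  case 0
  have T: "Nobj (Z0 # Z0 # replicate (n - 2) Z0)" using Nobj_triv[OF Z0_ob Z0] .
  show ?case
    by (rule Nobj_eq[OF T]) (auto simp: splitL_def spec_def nth_Cons')
next
  case (Suc m)
  have m: "m \<le> n - 2" using Suc.prems by simp
  have IH: "Nobj (splitL w m)" using Suc by simp
  have wm: "w m \<in> ob C" using w m by simp
  have Pr: "Nobj (pairL m (w m))" using Nobj_pair[OF m wm] .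
  show ?case
  proof (rule Nobj_sum[OF IH Pr])
    show "length (splitL w (Suc m)) = n" by (simp add: splitL_def)
    show "\<forall>i<n. biprod C (splitL w (Suc m) ! i) (splitL w m ! i) (pairL m (w m) ! i)"
    proof (intro allI impI)
      fix i assume i: "i < n"
      have w0: "w 0 \<in> ob C" using w by simp
      consider "i = 0" "m = 0" | "i = 0" "m > 0" | "0 < i" "i < m" | "0 < i" "i = m" | "i = Suc m" | "i > Suc m"
        by linarith
      thus "biprod C (splitL w (Suc m) ! i) (splitL w m ! i) (pairL m (w m) ! i)"
      proof cases
        case 1 thus ?thesis using i biprod_sym[OF biprod_zero[OF w0 Z0]]
          by (simp add: splitL_def spec_def pairL_def)
      next
        case 2 thus ?thesis using i biprod_zero[OF w0 Z0]
          by (simp add: splitL_def spec_def pairL_def)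
      next
        case 3
        have ob: "w (i - 1) \<in> ob C" "w i \<in> ob C" using w 3 m by auto
        thus ?thesis using i 3 biprod_zero[OF bp_ob[OF ob] Z0]
          by (simp add: splitL_def spec_def pairL_def)
      next
        case 4
        have ob: "w (i - 1) \<in> ob C" "w i \<in> ob C" using w 4 m by auto
        thus ?thesis using i 4 bp[OF ob]
          by (simp add: splitL_def spec_def pairL_def)
      next
        case 5
        thus ?thesis using i biprod_sym[OF biprod_zero[OF wm Z0]]
          by (simp add: splitL_def spec_def pairL_def)
      next
        case 6
        thus ?thesis using i biprod_zero[OF Z0_ob Z0]
          by (simp add: splitL_def spec_def pairL_def)
      qed
    qed
  qed
qed

end

context nang
begin

function Tsum :: "'o list \<Rightarrow> nat \<Rightarrow> 'o" where
  "Tsum X k = (if n \<le> k then Z0 else bp (X ! k) (Tsum X (Suc (Suc k))))"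
  by auto
termination by (relation "measure (\<lambda>(X, k). n - k)") auto

declare Tsum.simps[simp del]

lemma Tsum_ge: "n \<le> k \<Longrightarrow> Tsum X k = Z0"
  by (simp add: Tsum.simps)
lemma Tsum_lt: "k < n \<Longrightarrow> Tsum X k = bp (X ! k) (Tsum X (Suc (Suc k)))"
  by (subst Tsum.simps) simp

lemma Tsum_ob: "(\<And>i. i < n \<Longrightarrow> X ! i \<in> ob C) \<Longrightarrow> Tsum X k \<in> ob C"
proof (induction X k rule: Tsum.induct)
  case (1 X k)
  show ?case
  proof (cases "n \<le> k")
    case True thus ?thesis by (simp add: Tsum_ge)
  next
    case False
    thus ?thesis using 1 by (simp add: Tsum_lt)
  qed
qed

lemma Tsum_biprod: "(\<And>i. i < n \<Longrightarrow> X ! i \<in> ob C) \<Longrightarrow> k < n \<Longrightarrow> biprod C (Tsum X k) (X ! k) (Tsum X (Suc (Suc k)))"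
  using Tsum_lt bp Tsum_ob by simp

lemma n_arith: "Suc (n - Suc (Suc 0)) = n - Suc 0" "n - 2 = n - Suc (Suc 0)" "Suc (n - 2) = n - 1"
  using n3 by arith+

lemma MAIN: assumes X: "Nobj X" shows "sr (Tsum X 0) (Tsum X 1)"
proof -
  have Xob: "\<And>i. i < n \<Longrightarrow> X ! i \<in> ob C" using Nobj_nth_ob[OF X] .
  note Tob = Tsum_ob[OF Xob]
  define u where "u j = Tsum X (Suc (Suc j))" for j
  define v where "v j = Tsum X (Suc j)" for j
  have SU: "Nobj (splitL u (n - 1))" using Nobj_split[of u "n - 1"] Tob unfolding u_def by simp
  have SV: "Nobj (splitL v (n - 1))" using Nobj_split[of v "n - 1"] Tob unfolding v_def by simp
  let ?P = "map (\<lambda>i. bp (X ! i) (splitL u (n - 1) ! i)) [0..<n]"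
  let ?Q = "splitL v (n - 1)"
  have P: "Nobj ?P" using Nobj_bpsum[OF X SU] .
  have n0: "0 < n" using n3 by simp
  have P0: "?P ! 0 = Tsum X 0"
    using n0 n3 by (simp add: splitL_def spec_def u_def Tsum_lt)
  have Q0: "?Q ! 0 = Tsum X 1"
    using n0 n3 by (simp add: splitL_def spec_def v_def)
  have tl: "\<forall>i. 0 < i \<and> i < n \<longrightarrow> isomorphic_obj C (?Q ! i) (?P ! i)"
  proof (intro allI impI)
    fix i assume i: "0 < i \<and> i < n"
    show "isomorphic_obj C (?Q ! i) (?P ! i)"
    proof (cases "i < n - 1")
      case True
      have q: "?Q ! i = bp (Tsum X i) (Tsum X (Suc i))" using i True
        by (simp add: splitL_def spec_def v_def)
      have p: "?P ! i = bp (X ! i) (bp (Tsum X (Suc i)) (Tsum X (Suc (Suc i))))" using i True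
        by (simp add: splitL_def spec_def u_def)
      have ob: "X ! i \<in> ob C" "Tsum X i \<in> ob C" "Tsum X (Suc i) \<in> ob C" "Tsum X (Suc (Suc i)) \<in> ob C"
        using Xob Tob i by auto
      let ?Y = "bp (Tsum X (Suc (Suc i))) (Tsum X (Suc i))"
      let ?V = "bp (X ! i) ?Y"
      have 1: "isomorphic_obj C (?Q ! i) ?V"
        unfolding q using biprod_assoc_iso[OF bp[OF ob(2) ob(3)] Tsum_biprod[OF Xob] bp[OF ob(1) bp_ob[OF ob(4) ob(3)]]
          bp[OF ob(4) ob(3)]] i by simp
      have 2: "isomorphic_obj C ?Y (bp (Tsum X (Suc i)) (Tsum X (Suc (Suc i))))"
        using biprod_uniq[OF biprod_sym[OF bp[OF ob(4) ob(3)]] bp[OF ob(3) ob(4)]] .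
      have 3: "isomorphic_obj C ?V (?P ! i)"
        unfolding p using biprod_cong[OF bp[OF ob(1) bp_ob[OF ob(4) ob(3)]] bp[OF ob(1) bp_ob[OF ob(3) ob(4)]]
          iso_refl[OF ob(1)] 2] .
      show ?thesis using 1 3 iso_trans by blast
    next
      case False
      hence ii: "i = n - 1" using i by arith
      have "?Q ! i = Tsum X (n - 1)" using ii n3
        by (simp add: splitL_def spec_def v_def n_arith)
      also have "\<dots> = bp (X ! (n - 1)) Z0" using n3 by (simp add: Tsum_lt Tsum_ge)
      also have "\<dots> = ?P ! i" using ii n3 by (simp add: splitL_def spec_def u_def Tsum_ge)
      finally have eq: "?Q ! i = ?P ! i" .
      have "?P ! i \<in> ob C" using Nobj_nth_ob[OF P] i by blast
      thus ?thesis using eq iso_refl by simp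
    qed
  qed
  have b1: "biprod C (?P ! 0) (Tsum X 0) Z0" using P0 biprod_zero[OF Tob Z0] by simp
  have b2: "biprod C (?Q ! 0) (Tsum X 1) Z0" using Q0 biprod_zero[OF Tob Z0] by simp
  show ?thesis using srI[OF P SV b1 b2 tl] .
qed

lemma INV: assumes A: "A \<in> ob C" shows "sr (bp A (So A)) Z0"
proof -
  let ?T = "A # A # replicate (n - 2) Z0"
  let ?W = "tl ?T @ [So (hd ?T)]"
  have W: "Nobj ?W" using Nobj_rot[OF Nobj_triv[OF A Z0]] .
  have lW: "length ?W = n" using n3 by simp
  have Wi: "\<And>i. 0 < i \<Longrightarrow> i < n - 1 \<Longrightarrow> ?W ! i = Z0"
    using n3 by (auto simp: nth_append)
  have ltl: "length (tl ?T) = n - 1" using n3 by simp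
  have "?W ! (n - 1) = So (hd ?T)" using nth_append_length[of "tl ?T" "So (hd ?T)"] ltl by (simp only:)
  hence Wn: "?W ! (n - 1) = So A" by simp
  have W0: "?W ! 0 = A" using n3 by (simp add: nth_append)
  have Wob: "\<And>i. i < n \<Longrightarrow> ?W ! i \<in> ob C" using Nobj_nth_ob[OF W] .
  have SoA: "So A \<in> ob C" using A by simp
  have claim: "0 < k \<Longrightarrow> isomorphic_obj C (Tsum ?W k) (if even k \<and> k \<le> n - 1 then So A else Z0)" for k
  proof (induction ?W k rule: Tsum.induct)
    case (1 k)
    show ?case
    proof (cases "n \<le> k")
      case True
      have "\<not> k \<le> n - 1" using True n3 by arith
      thus ?thesis using True iso_refl Z0_ob n3 by (simp add: Tsum_ge)
    next
      case False
      have IH: "isomorphic_obj C (Tsum ?W (Suc (Suc k))) (if even (Suc (Suc k)) \<and> Suc (Suc k) \<le> n - 1 then So A else Z0)"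
        using 1 False by simp
      have b: "biprod C (Tsum ?W k) (?W ! k) (Tsum ?W (Suc (Suc k)))" using Tsum_biprod[OF Wob] False by simp
      show ?thesis
      proof (cases "k = n - 1")
        case True
        have "Tsum ?W (Suc (Suc k)) = Z0" using True n3 by (simp add: Tsum_ge)
        hence "biprod C (Tsum ?W k) (So A) Z0" using b True Wn by simp
        hence "isomorphic_obj C (Tsum ?W k) (So A)" using biprod_zero_iso Z0 by blast
        moreover have "even k" using True odd_n n3 by simp
        ultimately show ?thesis using True by simp
      next
        case False2: False
        have wk: "?W ! k = Z0" using Wi 1(2) False False2 by simp
        have "biprod C (Tsum ?W k) (Tsum ?W (Suc (Suc k))) Z0" using b wk biprod_sym by simp
        hence i1: "isomorphic_obj C (Tsum ?W k) (Tsum ?W (Suc (Suc k)))" using biprod_zero_iso Z0 by blast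
        have eqc: "(if even (Suc (Suc k)) \<and> Suc (Suc k) \<le> n - 1 then So A else Z0) =
              (if even k \<and> k \<le> n - 1 then So A else Z0)"
        proof (cases "even k")
          case True
          hence "Suc (Suc k) \<le> n - 1"
            using True False False2 odd_n by presburger
          thus ?thesis using True False False2 by simp
        next
          case False3: False thus ?thesis by simp
        qed
        show ?thesis using iso_trans[OF i1 IH] eqc by simp
      qed
    qed
  qed
  have "Suc (Suc 0) \<le> n - Suc 0" using n3 by arith
  hence T2: "isomorphic_obj C (Tsum ?W 2) (So A)" using claim[of 2] n3 by (simp add: numeral_2_eq_2)
  have T1: "isomorphic_obj C (Tsum ?W 1) Z0" using claim[of 1] by simp
  have T0: "biprod C (Tsum ?W 0) A (Tsum ?W 2)" using Tsum_biprod[OF Wob, of 0] n3 W0 by (simp add: numeral_2_eq_2)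
  have T0': "isomorphic_obj C (Tsum ?W 0) (bp A (So A))"
    using biprod_cong[OF T0 bp[OF A SoA] iso_refl[OF A] T2] .
  have m: "sr (Tsum ?W 0) (Tsum ?W 1)" using MAIN[OF W] .
  have "sr (bp A (So A)) (Tsum ?W 1)" using sr_isoL[OF m T0'] .
  hence "sr (Tsum ?W 1) (bp A (So A))" by (rule sr_sym)
  hence "sr Z0 (bp A (So A))" using sr_isoL[OF _ T1] by blast
  thus ?thesis by (rule sr_sym)
qed

end

context nang
begin

abbreviation cls where "cls \<equiv> sim_class n C N"
abbreviation PI where "PI \<equiv> pi_group n C N"

lemma equiv_sr: "equiv (ob C) {(A, B). sr A B}"
  unfolding equiv_def refl_on_def sym_def trans_def
  using sr_ob sr_refl sr_sym sr_trans by blast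

lemma cls_eq: "sr A B \<Longrightarrow> cls A = cls B"
  unfolding sim_class_def using sr_sym sr_trans by blast

lemma cls_eq_iff: "A \<in> ob C \<Longrightarrow> B \<in> ob C \<Longrightarrow> cls A = cls B \<longleftrightarrow> sr A B"
proof
  assume "A \<in> ob C" "B \<in> ob C" "cls A = cls B"
  hence "B \<in> cls A" using sr_refl unfolding sim_class_def by auto
  thus "sr A B" unfolding sim_class_def by simp
qed (rule cls_eq)

lemma cls_mem: "A \<in> ob C \<Longrightarrow> A \<in> cls A"
  unfolding sim_class_def using sr_refl by simp

lemma cls_some: "A \<in> ob C \<Longrightarrow> sr A (SOME A'. A' \<in> cls A)"
proof -
  assume A: "A \<in> ob C"
  have "(SOME A'. A' \<in> cls A) \<in> cls A" using cls_mem[OF A] by (rule someI)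
  thus ?thesis unfolding sim_class_def by simp
qed

lemma carrier_PI: "carrier PI = cls ` ob C"
  by (simp add: pi_group_def)

lemma one_PI: "one PI = cls Z0"
  by (simp add: pi_group_def Z0_def)

lemma MULT: assumes A: "A \<in> ob C" and B: "B \<in> ob C" and X: "biprod C X A B"
  shows "mult PI (cls A) (cls B) = cls X"
proof -
  let ?A = "SOME A'. A' \<in> cls A" and ?B = "SOME B'. B' \<in> cls B"
  have sA: "sr A ?A" and sB: "sr B ?B" using cls_some A B by blast+
  have ob: "?A \<in> ob C" "?B \<in> ob C" using sA sB sr_ob by blast+
  let ?X = "SOME X. X \<in> ob C \<and> biprod C X ?A ?B"
  have "\<exists>X. X \<in> ob C \<and> biprod C X ?A ?B" using bp[OF ob] bp_ob[OF ob] by blast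
  hence X': "?X \<in> ob C \<and> biprod C ?X ?A ?B" by (rule someI_ex)
  have "sr X ?X" using sr_sum[OF sA sB X] X' by blast
  hence "cls ?X = cls X" using cls_eq sr_sym by metis
  thus ?thesis by (simp add: pi_group_def)
qed

lemma MULT_bp: "A \<in> ob C \<Longrightarrow> B \<in> ob C \<Longrightarrow> mult PI (cls A) (cls B) = cls (bp A B)"
  using MULT bp by blast

lemma PI_comm_group: "comm_group PI"
proof (rule comm_groupI)
  fix x y assume "x \<in> carrier PI" "y \<in> carrier PI"
  then obtain A B where AB: "A \<in> ob C" "B \<in> ob C" "x = cls A" "y = cls B" unfolding carrier_PI by blast
  show "mult PI x y \<in> carrier PI" unfolding AB MULT_bp[OF AB(1,2)] carrier_PI using AB by simp
  show "mult PI x y = mult PI y x"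
    unfolding AB MULT_bp[OF AB(1,2)] MULT_bp[OF AB(2,1)]
    using cls_eq sr_iso biprod_uniq[OF bp[OF AB(1,2)] biprod_sym[OF bp[OF AB(2,1)]]] by blast
next
  show "one PI \<in> carrier PI" unfolding one_PI carrier_PI by simp
next
  fix x y z assume "x \<in> carrier PI" "y \<in> carrier PI" "z \<in> carrier PI"
  then obtain A B D where AB: "A \<in> ob C" "B \<in> ob C" "D \<in> ob C" "x = cls A" "y = cls B" "z = cls D"
    unfolding carrier_PI by blast
  have ob: "bp A B \<in> ob C" "bp B D \<in> ob C" using AB by simp_all
  have "isomorphic_obj C (bp (bp A B) D) (bp A (bp B D))"
    using biprod_assoc_iso[OF bp[OF ob(1) AB(3)] bp[OF AB(1,2)] bp[OF AB(1) ob(2)] bp[OF AB(2,3)]] .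
  thus "mult PI (mult PI x y) z = mult PI x (mult PI y z)"
    unfolding AB MULT_bp[OF AB(1,2)] MULT_bp[OF AB(2,3)] MULT_bp[OF ob(1) AB(3)] MULT_bp[OF AB(1) ob(2)]
    using cls_eq sr_iso by blast
next
  fix x assume "x \<in> carrier PI"
  then obtain A where A: "A \<in> ob C" "x = cls A" unfolding carrier_PI by blast
  have "isomorphic_obj C (bp Z0 A) A" using biprod_zero_iso[OF biprod_sym[OF bp[OF Z0_ob A(1)]] Z0] .
  thus "mult PI (one PI) x = x" unfolding A one_PI MULT_bp[OF Z0_ob A(1)] using cls_eq sr_iso by blast
next
  fix x assume "x \<in> carrier PI"
  then obtain A where A: "A \<in> ob C" "x = cls A" unfolding carrier_PI by blast
  have SA: "So A \<in> ob C" using A by simp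
  have "sr (bp A (So A)) Z0" using INV[OF A(1)] .
  moreover have "isomorphic_obj C (bp A (So A)) (bp (So A) A)"
    using biprod_uniq[OF bp[OF A(1) SA] biprod_sym[OF bp[OF SA A(1)]]] .
  ultimately have "sr (bp (So A) A) Z0" using sr_isoL by blast
  hence "mult PI (cls (So A)) x = one PI" unfolding A one_PI MULT_bp[OF SA A(1)] by (rule cls_eq)
  thus "\<exists>y\<in>carrier PI. mult PI y x = one PI" using SA carrier_PI by blast
qed

lemma INV_PI: "A \<in> ob C \<Longrightarrow> inv\<^bsub>PI\<^esub> (cls A) = cls (So A)"
proof -
  assume A: "A \<in> ob C"
  have SA: "So A \<in> ob C" using A by simp
  have "sr (bp A (So A)) Z0" using INV[OF A] .
  moreover have "isomorphic_obj C (bp A (So A)) (bp (So A) A)"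
    using biprod_uniq[OF bp[OF A SA] biprod_sym[OF bp[OF SA A]]] .
  ultimately have "sr (bp (So A) A) Z0" using sr_isoL by blast
  hence e: "mult PI (cls (So A)) (cls A) = one PI" unfolding one_PI MULT_bp[OF SA A] by (rule cls_eq)
  show ?thesis
    using group.inv_equality[OF comm_group.axioms(2)[OF PI_comm_group] e] A SA carrier_PI by simp
qed

end

context nang
begin

abbreviation SS where "SS \<equiv> iso_class C ` ob C"
abbreviation fo where "fo A \<equiv> frag_of (iso_class C A)"
abbreviation FG where "FG \<equiv> FC C"
abbreviation RR where "RR \<equiv> RC n C N"

lemma FG_cg: "comm_group FG" unfolding FC_def by (rule abelian_free_Abelian_group)
lemma FG_g: "group FG" using FG_cg comm_group.axioms(2) by blast

lemma carrier_FG: "x \<in> carrier FG \<longleftrightarrow> Poly_Mapping.keys x \<subseteq> SS"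
  unfolding FC_def by simp
lemma mult_FG[simp]: "mult FG x y = x + y" unfolding FC_def by simp
lemma one_FG[simp]: "one FG = 0" unfolding FC_def by simp
lemma inv_FG: "x \<in> carrier FG \<Longrightarrow> inv\<^bsub>FG\<^esub> x = - x" unfolding FC_def by simp

lemma fo_carrier: "A \<in> ob C \<Longrightarrow> fo A \<in> carrier FG"
  unfolding carrier_FG by simp

lemma FG_add: "x \<in> carrier FG \<Longrightarrow> y \<in> carrier FG \<Longrightarrow> x + y \<in> carrier FG"
  using group.subgroup_self[OF FG_g] subgroup.m_closed by fastforce
lemma FG_neg: "x \<in> carrier FG \<Longrightarrow> - x \<in> carrier FG"
  using group.inv_closed[OF FG_g] inv_FG by fastforce
lemma FG_diff: "x \<in> carrier FG \<Longrightarrow> y \<in> carrier FG \<Longrightarrow> x - y \<in> carrier FG"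
proof -
  assume "x \<in> carrier FG" "y \<in> carrier FG"
  hence "x + - y \<in> carrier FG" using FG_add FG_neg by blast
  thus ?thesis by simp
qed
lemma FG_cmul: "x \<in> carrier FG \<Longrightarrow> frag_cmul k x \<in> carrier FG"
  unfolding carrier_FG using keys_cmul by blast
lemma FG_sum: "(\<And>i. i \<in> I \<Longrightarrow> x i \<in> carrier FG) \<Longrightarrow> sum x I \<in> carrier FG"
  unfolding FC_def by (rule sum_closed_free_Abelian_group) (simp add: FC_def)

definition chiL :: "'o list \<Rightarrow> 'o set \<Rightarrow>\<^sub>0 int" where
  "chiL L = (\<Sum>i<n. frag_cmul ((-1) ^ i) (fo (L ! i)))"

lemma chi_chiL: "chi n C S = chiL (fst S)" unfolding chi_def chiL_def by simp

lemma chiL_carrier: "(\<And>i. i < n \<Longrightarrow> L ! i \<in> ob C) \<Longrightarrow> chiL L \<in> carrier FG"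
  unfolding chiL_def by (rule FG_sum) (simp add: FG_cmul fo_carrier)

lemma gens_carrier: "chi n C ` N \<subseteq> carrier FG"
proof
  fix x assume "x \<in> chi n C ` N"
  then obtain S where S: "S \<in> N" "x = chi n C S" by blast
  obtain L a where La: "S = (L, a)" by (cases S)
  have "Nobj L" using S La unfolding Nobj_def by blast
  thus "x \<in> carrier FG" using S La chi_chiL chiL_carrier Nobj_nth_ob by simp
qed

lemma RR_def': "RR = generate FG (chi n C ` N)" using odd_n unfolding RC_def by simp

lemma RR_sub: "subgroup RR FG"
  unfolding RR_def' using group.generate_is_subgroup[OF FG_g gens_carrier] .

lemma RR_normal: "RR \<lhd> FG" using comm_group.subgroup_imp_normal[OF FG_cg RR_sub] .

lemma RR_carrier: "x \<in> RR \<Longrightarrow> x \<in> carrier FG" by (rule subgroup.mem_carrier[OF RR_sub])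
lemma RR_zero: "0 \<in> RR" using subgroup.one_closed[OF RR_sub] by simp
lemma RR_add: "x \<in> RR \<Longrightarrow> y \<in> RR \<Longrightarrow> x + y \<in> RR"
proof -
  assume "x \<in> RR" "y \<in> RR"
  hence "mult FG x y \<in> RR" by (rule subgroup.m_closed[OF RR_sub])
  thus ?thesis by simp
qed
lemma RR_neg: "x \<in> RR \<Longrightarrow> - x \<in> RR"
proof -
  assume x: "x \<in> RR"
  hence "inv\<^bsub>FG\<^esub> x \<in> RR" by (rule subgroup.m_inv_closed[OF RR_sub])
  thus ?thesis using inv_FG[OF RR_carrier[OF x]] by simp
qed
lemma RR_diff: "x \<in> RR \<Longrightarrow> y \<in> RR \<Longrightarrow> x - y \<in> RR" proof -
  assume "x \<in> RR" "y \<in> RR"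
  hence "x + - y \<in> RR" using RR_add RR_neg by blast
  thus ?thesis by simp
qed
lemma RR_cmul: "x \<in> RR \<Longrightarrow> frag_cmul k x \<in> RR"
proof -
  assume x: "x \<in> RR"
  have "x [^]\<^bsub>FG\<^esub> k \<in> RR" using group.subgroup_int_pow_closed[OF FG_g RR_sub x] .
  moreover have "x [^]\<^bsub>FG\<^esub> k = frag_cmul k x"
    using RR_carrier[OF x] unfolding FC_def by (simp add: carrier_FG)
  ultimately show ?thesis by simp
qed

lemma RR_chiL: "Nobj L \<Longrightarrow> chiL L \<in> RR"
proof -
  assume "Nobj L"
  then obtain a where a: "(L, a) \<in> N" unfolding Nobj_def by blast
  have "chi n C (L, a) \<in> RR" unfolding RR_def' using a by (intro generate.incl) blast
  thus ?thesis using chi_chiL by simp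
qed

lemma iso_class_eq: "isomorphic_obj C A B \<Longrightarrow> iso_class C A = iso_class C B"
  unfolding iso_class_def using iso_sym iso_trans by blast

lemma frag_cmul_sum_left: "finite I \<Longrightarrow> frag_cmul (sum c I) x = (\<Sum>i\<in>I. frag_cmul (c i) x)"
  by (induction I rule: finite_induct) (simp_all add: frag_cmul_distrib)

lemma cmul_sign: "frag_cmul ((-1) ^ i) x = (if even i then x else - x)"
  by simp

lemma sum_sign: "(\<Sum>i<2 * m. (-1::int) ^ i) = 0"
  by (induction m) (simp_all add: numeral_2_eq_2)

lemma sum_sign_odd: "(\<Sum>i<n. (-1::int) ^ i) = 1"
proof -
  obtain m where m: "n = Suc (2 * m)" using odd_n by (auto elim: oddE)
  show ?thesis unfolding m using sum_sign[of m] by simp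
qed

lemma K3: "fo Z0 \<in> RR"
proof -
  have T: "Nobj (Z0 # Z0 # replicate (n - 2) Z0)" using Nobj_triv[OF Z0_ob Z0] .
  have "chiL (Z0 # Z0 # replicate (n - 2) Z0) = (\<Sum>i<n. frag_cmul ((-1) ^ i) (fo Z0))"
    unfolding chiL_def by (rule sum.cong) (auto simp: nth_Cons')
  also have "\<dots> = frag_cmul (\<Sum>i<n. (-1) ^ i) (fo Z0)" by (simp add: frag_cmul_sum_left)
  also have "\<dots> = fo Z0" using sum_sign_odd by simp
  finally show ?thesis using RR_chiL[OF T] by simp
qed

lemma zero_tail:
  assumes L: "Nobj L" and k: "k \<le> n" and z: "\<forall>i. k \<le> i \<and> i < n \<longrightarrow> isomorphic_obj C (L ! i) Z0"
  shows "(\<Sum>i<k. frag_cmul ((-1) ^ i) (fo (L ! i))) \<in> RR"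
proof -
  have sp: "chiL L = (\<Sum>i<k. frag_cmul ((-1) ^ i) (fo (L ! i))) + (\<Sum>i\<in>{k..<n}. frag_cmul ((-1) ^ i) (fo (L ! i)))"
    unfolding chiL_def lessThan_atLeast0 using k by (simp add: sum.atLeastLessThan_concat)
  have "(\<Sum>i\<in>{k..<n}. frag_cmul ((-1) ^ i) (fo (L ! i))) = (\<Sum>i\<in>{k..<n}. frag_cmul ((-1) ^ i) (fo Z0))"
    by (rule sum.cong) (use z iso_class_eq in auto)
  also have "\<dots> = frag_cmul (\<Sum>i\<in>{k..<n}. (-1) ^ i) (fo Z0)" by (simp add: frag_cmul_sum_left)
  finally have t: "(\<Sum>i\<in>{k..<n}. frag_cmul ((-1) ^ i) (fo (L ! i))) \<in> RR" using RR_cmul[OF K3] by simp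
  have "(\<Sum>i<k. frag_cmul ((-1) ^ i) (fo (L ! i))) = chiL L - (\<Sum>i\<in>{k..<n}. frag_cmul ((-1) ^ i) (fo (L ! i)))"
    using sp by simp
  thus ?thesis using RR_diff[OF RR_chiL[OF L] t] by simp
qed

end

context nang
begin

lemma h2: assumes A: "A \<in> ob C" and B: "B \<in> ob C" and X: "biprod C X A B"
  shows "fo X - fo A - fo B \<in> RR"
proof -
  let ?L = "map (\<lambda>i. if i = 0 then A else if i = 1 then X else if i = 2 then B else Z0) [0..<n]"
  have T: "Nobj (A # A # replicate (n - 2) Z0)" using Nobj_triv[OF A Z0] .
  have Pr: "Nobj (pairL 1 B)" using Nobj_pair[OF _ B] n3 by simp
  have Xob: "X \<in> ob C" using X biprod_ob by blast
  have L: "Nobj ?L"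
  proof (rule Nobj_sum[OF T Pr])
    show "length ?L = n" by simp
    show "\<forall>i<n. biprod C (?L ! i) ((A # A # replicate (n - 2) Z0) ! i) (pairL 1 B ! i)"
    proof (intro allI impI)
      fix i assume i: "i < n"
      consider "i = 0" | "i = 1" | "i = 2" | "i \<ge> 3" by linarith
      thus "biprod C (?L ! i) ((A # A # replicate (n - 2) Z0) ! i) (pairL 1 B ! i)"
      proof cases
        case 1 thus ?thesis using i biprod_zero[OF A Z0] by (simp add: pairL_def)
      next
        case 2 thus ?thesis using i X by (simp add: pairL_def)
      next
        case 3 thus ?thesis using i biprod_sym[OF biprod_zero[OF B Z0]] by (simp add: pairL_def)
      next
        case 4
        have "(A # A # replicate (n - 2) Z0) ! i = Z0" using 4 i by (simp add: nth_Cons')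
        thus ?thesis using 4 i biprod_zero[OF Z0_ob Z0] by (simp add: pairL_def)
      qed
    qed
  qed
  have "(\<Sum>i<3. frag_cmul ((-1) ^ i) (fo (?L ! i))) \<in> RR"
    by (rule zero_tail[OF L]) (use n3 iso_refl[OF Z0_ob] in auto)
  moreover have "(\<Sum>i<3. frag_cmul ((-1) ^ i) (fo (?L ! i))) = fo A - fo X + fo B"
    using n3 by (simp add: numeral_3_eq_3)
  ultimately have "fo A - fo X + fo B \<in> RR" by simp
  hence "- (fo A - fo X + fo B) \<in> RR" by (rule RR_neg)
  thus ?thesis by (simp add: algebra_simps)
qed

lemma chiL_diff:
  assumes P: "Nobj P" and Q: "Nobj Q" and t: "tl P = tl Q"
  shows "fo (P ! 0) - fo (Q ! 0) \<in> RR"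
proof -
  obtain m where m: "n = Suc m" using n3 by (cases n) auto
  have lP: "length P = n" and lQ: "length Q = n" using Nobj_len P Q by auto
  have eq: "\<And>i. i < m \<Longrightarrow> Q ! Suc i = P ! Suc i" using tl_eq_nth[OF lP lQ t] m by simp
  have c: "chiL L = (\<Sum>i<Suc m. frag_cmul ((-1) ^ i) (fo (L ! i)))" for L
    unfolding chiL_def using m by simp
  have "chiL P = fo (P ! 0) + (\<Sum>i<m. frag_cmul ((-1) ^ Suc i) (fo (P ! Suc i)))"
    unfolding c sum.lessThan_Suc_shift by simp
  moreover have "chiL Q = fo (Q ! 0) + (\<Sum>i<m. frag_cmul ((-1) ^ Suc i) (fo (P ! Suc i)))"
    unfolding c sum.lessThan_Suc_shift using eq by simp
  ultimately have "chiL P - chiL Q = fo (P ! 0) - fo (Q ! 0)" by simp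
  thus ?thesis using RR_diff[OF RR_chiL[OF P] RR_chiL[OF Q]] by simp
qed

lemma h1: assumes "sr A B" shows "fo A - fo B \<in> RR"
proof -
  obtain C1 P Q where h: "Nobj P" "Nobj Q" "biprod C (P ! 0) A C1" "biprod C (Q ! 0) B C1" "tl P = tl Q"
    using srE[OF assms] by blast
  have ob: "A \<in> ob C" "B \<in> ob C" "C1 \<in> ob C" using h biprod_ob by blast+
  have 1: "fo (P ! 0) - fo (Q ! 0) \<in> RR" using chiL_diff[OF h(1,2,5)] .
  have 2: "fo (P ! 0) - fo A - fo C1 \<in> RR" using h2[OF ob(1,3) h(3)] .
  have 3: "fo (Q ! 0) - fo B - fo C1 \<in> RR" using h2[OF ob(2,3) h(4)] .
  have "(fo (P ! 0) - fo (Q ! 0)) - (fo (P ! 0) - fo A - fo C1) + (fo (Q ! 0) - fo B - fo C1) \<in> RR"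
    using RR_add[OF RR_diff[OF 1 2] 3] .
  thus ?thesis by (simp add: algebra_simps)
qed

lemma K4: assumes A: "A \<in> ob C" shows "fo A + fo (So A) \<in> RR"
proof -
  have SA: "So A \<in> ob C" using A by simp
  have 1: "fo (bp A (So A)) - fo Z0 \<in> RR" using h1[OF INV[OF A]] .
  have 2: "fo (bp A (So A)) - fo A - fo (So A) \<in> RR" using h2[OF A SA bp[OF A SA]] .
  have "(fo (bp A (So A)) - fo Z0) + fo Z0 - (fo (bp A (So A)) - fo A - fo (So A)) \<in> RR"
    using RR_diff[OF RR_add[OF 1 K3] 2] .
  thus ?thesis by (simp add: algebra_simps)
qed

lemma h3: assumes x: "x \<in> carrier FG" shows "\<exists>A\<in>ob C. x - fo A \<in> RR"
proof -
  have k: "Poly_Mapping.keys x \<subseteq> SS" using x carrier_FG by blast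
  show ?thesis
  proof (rule free_Abelian_group_induct[OF k, where P = "\<lambda>x. \<exists>A\<in>ob C. x - fo A \<in> RR"])
    have "0 - fo Z0 \<in> RR" using RR_neg[OF K3] by simp
    thus "\<exists>A\<in>ob C. 0 - fo A \<in> RR" using Z0_ob by blast
  next
    fix x y assume "\<exists>A\<in>ob C. x - fo A \<in> RR" "\<exists>A\<in>ob C. y - fo A \<in> RR"
    then obtain A B where AB: "A \<in> ob C" "B \<in> ob C" "x - fo A \<in> RR" "y - fo B \<in> RR" by blast
    have SB: "So B \<in> ob C" using AB by simp
    let ?D = "bp A (So B)"
    have D: "?D \<in> ob C" using AB SB by simp
    have 1: "fo ?D - fo A - fo (So B) \<in> RR" using h2[OF AB(1) SB bp[OF AB(1) SB]] .
    have 2: "fo B + fo (So B) \<in> RR" using K4[OF AB(2)] .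
    have "(x - fo A) - (y - fo B) - (fo ?D - fo A - fo (So B)) - (fo B + fo (So B)) \<in> RR"
      using RR_diff[OF RR_diff[OF RR_diff[OF AB(3) AB(4)] 1] 2] .
    hence "x - y - fo ?D \<in> RR" by (simp add: algebra_simps)
    thus "\<exists>A\<in>ob C. x - y - fo A \<in> RR" using D by blast
  next
    fix a assume "a \<in> SS"
    then obtain A where "A \<in> ob C" "a = iso_class C A" by blast
    hence "frag_of a - fo A \<in> RR" using RR_zero by simp
    thus "\<exists>A\<in>ob C. frag_of a - fo A \<in> RR" using \<open>A \<in> ob C\<close> by blast
  qed
qed

end

context nang
begin

lemma FG_free: "FG = free_Abelian_group SS" unfolding FC_def ..

lemma g_exists: "\<exists>g. g \<in> hom FG PI \<and> (\<forall>A\<in>ob C. g (fo A) = cls A)"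
proof -
  let ?f = "\<lambda>s. cls (SOME A. A \<in> s)"
  have some: "(SOME A'. A' \<in> iso_class C A) \<in> iso_class C A" if A: "A \<in> ob C" for A
    by (rule someI[of _ A]) (use A in \<open>simp add: iso_class_def iso_refl\<close>)
  have "?f ` SS \<subseteq> carrier PI"
  proof
    fix y assume "y \<in> ?f ` SS"
    then obtain A where A: "A \<in> ob C" "y = ?f (iso_class C A)" by blast
    have "(SOME A'. A' \<in> iso_class C A) \<in> ob C" using some[OF A(1)] by (simp add: iso_class_def)
    thus "y \<in> carrier PI" using A carrier_PI by simp
  qed
  then obtain g where g: "g \<in> hom (free_Abelian_group SS) PI" "\<And>x. x \<in> SS \<Longrightarrow> g (frag_of x) = ?f x"
    using comm_group.free_Abelian_group_universal[OF PI_comm_group] by metis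
  have "\<forall>A\<in>ob C. g (fo A) = cls A"
  proof
    fix A assume A: "A \<in> ob C"
    have "(SOME A'. A' \<in> iso_class C A) \<in> iso_class C A" using some[OF A] .
    hence "isomorphic_obj C A (SOME A'. A' \<in> iso_class C A)" by (simp add: iso_class_def)
    hence "cls (SOME A'. A' \<in> iso_class C A) = cls A" using cls_eq sr_iso sr_sym by metis
    thus "g (fo A) = cls A" using g(2) A by simp
  qed
  thus ?thesis using g(1) FG_free by metis
qed

lemma gchi:
  assumes g: "g \<in> hom FG PI" and gfo: "\<forall>A\<in>ob C. g (fo A) = cls A" and L: "Nobj L"
  shows "g (chiL L) = one PI"
proof -
  interpret P: comm_group PI by (rule PI_comm_group)
  interpret gh: group_hom FG PI g unfolding group_hom_def group_hom_axioms_def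
    using FG_g P.is_group g by blast
  have Lob: "\<And>i. i < n \<Longrightarrow> L ! i \<in> ob C" using Nobj_nth_ob[OF L] .
  let ?T = "Tsum L"
  note Tob = Tsum_ob[OF Lob]
  define ps where "ps k = (\<Sum>i\<in>{k..<n}. frag_cmul ((-1) ^ i) (fo (L ! i)))" for k
  have ps_car: "ps k \<in> carrier FG" for k
    unfolding ps_def by (rule FG_sum) (use Lob in \<open>simp add: FG_cmul fo_carrier\<close>)
  have cT: "\<And>k. cls (?T k) \<in> carrier PI" using carrier_PI Tob by blast
  have claim: "k \<le> n \<Longrightarrow> g (ps k) = (if even k then mult PI (cls (?T k)) (inv\<^bsub>PI\<^esub> (cls (?T (Suc k))))
      else mult PI (cls (?T (Suc k))) (inv\<^bsub>PI\<^esub> (cls (?T k))))" for k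
  proof (induction k rule: inc_induct)
    case base
    have "ps n = 0" unfolding ps_def by simp
    hence "g (ps n) = one PI" using gh.hom_one by simp
    moreover have "?T n = Z0" "?T (Suc n) = Z0" by (simp_all add: Tsum_ge)
    moreover have "cls Z0 \<in> carrier PI" using carrier_PI by simp
    ultimately show ?case using odd_n P.r_inv by simp
  next
    case (step k)
    have k: "k < n" using step by simp
    have sp: "ps k = frag_cmul ((-1) ^ k) (fo (L ! k)) + ps (Suc k)"
      unfolding ps_def using sum.atLeast_Suc_lessThan[OF k] by simp
    have m: "mult PI (cls (L ! k)) (cls (?T (Suc (Suc k)))) = cls (?T k)"
      using MULT[OF Lob[OF k] Tob Tsum_biprod[OF Lob k]] .
    have cL: "cls (L ! k) \<in> carrier PI" using carrier_PI Lob k by blast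
    have fL: "fo (L ! k) \<in> carrier FG" using fo_carrier Lob k by blast
    show ?case
    proof (cases "even k")
      case True
      have "g (ps k) = mult PI (g (fo (L ! k))) (g (ps (Suc k)))"
        unfolding sp using True gh.hom_mult[OF fL ps_car] by simp
      also have "\<dots> = mult PI (cls (L ! k)) (mult PI (cls (?T (Suc (Suc k)))) (inv\<^bsub>PI\<^esub> (cls (?T (Suc k)))))"
        using step.IH True gfo Lob k by simp
      also have "\<dots> = mult PI (cls (?T k)) (inv\<^bsub>PI\<^esub> (cls (?T (Suc k))))"
        using m cL cT by (simp add: P.m_assoc[symmetric])
      finally show ?thesis using True by simp
    next
      case False
      have "g (ps k) = mult PI (g (- fo (L ! k))) (g (ps (Suc k)))"
        unfolding sp using False gh.hom_mult[OF FG_neg[OF fL] ps_car] by simp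
      also have "g (- fo (L ! k)) = inv\<^bsub>PI\<^esub> (cls (L ! k))"
        using gh.hom_inv[OF fL] inv_FG[OF fL] gfo Lob k by simp
      also have "g (ps (Suc k)) = mult PI (cls (?T (Suc k))) (inv\<^bsub>PI\<^esub> (cls (?T (Suc (Suc k)))))"
        using step.IH False by simp
      also have "mult PI (inv\<^bsub>PI\<^esub> (cls (L ! k))) (mult PI (cls (?T (Suc k))) (inv\<^bsub>PI\<^esub> (cls (?T (Suc (Suc k))))))
          = mult PI (cls (?T (Suc k))) (inv\<^bsub>PI\<^esub> (mult PI (cls (L ! k)) (cls (?T (Suc (Suc k))))))"
        using cL cT by (simp add: P.inv_mult P.m_ac)
      also have "\<dots> = mult PI (cls (?T (Suc k))) (inv\<^bsub>PI\<^esub> (cls (?T k)))" using m by simp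
      finally show ?thesis using False by simp
    qed
  qed
  have "chiL L = ps 0" unfolding chiL_def ps_def by (simp add: lessThan_atLeast0)
  hence "g (chiL L) = mult PI (cls (?T 0)) (inv\<^bsub>PI\<^esub> (cls (?T 1)))" using claim[of 0] by simp
  also have "cls (?T 0) = cls (?T 1)" using cls_eq[OF MAIN[OF L]] .
  finally show ?thesis using cT P.r_inv by simp
qed

lemma h4: assumes A: "A \<in> ob C" and B: "B \<in> ob C" and d: "fo A - fo B \<in> RR"
  shows "cls A = cls B"
proof -
  obtain g where g: "g \<in> hom FG PI" and gfo: "\<forall>A\<in>ob C. g (fo A) = cls A" using g_exists by blast
  interpret P: comm_group PI by (rule PI_comm_group)
  interpret gh: group_hom FG PI g unfolding group_hom_def group_hom_axioms_def
    using FG_g P.is_group g by blast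
  have gens: "chi n C ` N \<subseteq> kernel FG PI g"
  proof
    fix x assume "x \<in> chi n C ` N"
    then obtain S where S: "S \<in> N" "x = chi n C S" by blast
    obtain L a where La: "S = (L, a)" by (cases S)
    have L: "Nobj L" using S La unfolding Nobj_def by blast
    have "x \<in> carrier FG" using gens_carrier S by blast
    moreover have "g x = one PI" using S La chi_chiL gchi[OF g gfo L] by simp
    ultimately show "x \<in> kernel FG PI g" unfolding kernel_def by simp
  qed
  have "RR \<subseteq> kernel FG PI g"
    unfolding RR_def' using group.generate_subgroup_incl[OF FG_g gens gh.subgroup_kernel] .
  hence "g (fo A - fo B) = one PI" using d unfolding kernel_def by blast
  moreover have "fo A - fo B = mult FG (fo A) (inv\<^bsub>FG\<^esub> (fo B))" using inv_FG fo_carrier B by simp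
  ultimately have e: "mult PI (cls A) (inv\<^bsub>PI\<^esub> (cls B)) = one PI"
    using gh.hom_mult gh.hom_inv fo_carrier A B gfo by (simp del: mult_FG)
  have cA: "cls A \<in> carrier PI" and cB: "cls B \<in> carrier PI" using carrier_PI A B by blast+
  have "cls A = mult PI (mult PI (cls A) (inv\<^bsub>PI\<^esub> (cls B))) (cls B)"
    using cA cB by (simp add: P.m_assoc)
  thus ?thesis using e cB by simp
qed

end

context nang
begin

lemma coset_eq: assumes x: "x \<in> carrier FG" and y: "y \<in> carrier FG" and d: "x - y \<in> RR"
  shows "r_coset FG RR x = r_coset FG RR y"
proof -
  have "mult FG (x - y) y \<in> r_coset FG RR y"
    using group.rcosI[OF FG_g d subgroup.subset[OF RR_sub] y] .
  hence "x \<in> r_coset FG RR y" by simp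
  hence "r_coset FG RR y = r_coset FG RR x" using group.repr_independence[OF FG_g _ y RR_sub] by blast
  thus ?thesis by simp
qed

lemma coset_eqD: assumes x: "x \<in> carrier FG" and y: "y \<in> carrier FG"
  and e: "r_coset FG RR x = r_coset FG RR y" shows "x - y \<in> RR"
proof -
  have "x \<in> r_coset FG RR x" using group.rcos_self[OF FG_g x RR_sub] .
  hence "x \<in> r_coset FG RR y" using e by simp
  then obtain h where h: "h \<in> RR" "x = mult FG h y" unfolding r_coset_def by blast
  thus ?thesis by simp
qed

definition hh :: "'o set \<Rightarrow> ('o set \<Rightarrow>\<^sub>0 int) set" where
  "hh x = r_coset FG RR (fo (SOME A. A \<in> x))"

lemma hh_cls: assumes A: "A \<in> ob C" shows "hh (cls A) = K0_class n C N A"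
proof -
  let ?A = "SOME A'. A' \<in> cls A"
  have s: "sr A ?A" using cls_some[OF A] .
  have Aob: "?A \<in> ob C" using s sr_ob by blast
  have "fo ?A - fo A \<in> RR" using h1[OF sr_sym[OF s]] .
  hence "r_coset FG RR (fo ?A) = r_coset FG RR (fo A)" using coset_eq fo_carrier A Aob by blast
  thus ?thesis unfolding hh_def K0_class_def by simp
qed

lemma carrier_K0: "carrier (K0 n C N) = (\<lambda>x. r_coset FG RR x) ` carrier FG"
  unfolding K0_def by (rule carrier_FactGroup)

lemma mult_K0: "mult (K0 n C N) = set_mult FG" unfolding K0_def by simp

lemma hh_iso: "hh \<in> iso PI (K0 n C N)"
proof -
  have hom: "hh \<in> hom PI (K0 n C N)"
  proof (rule homI)
    fix x assume "x \<in> carrier PI"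
    then obtain A where A: "A \<in> ob C" "x = cls A" using carrier_PI by blast
    show "hh x \<in> carrier (K0 n C N)"
      unfolding A(2) hh_cls[OF A(1)] K0_class_def carrier_K0 using fo_carrier[OF A(1)] by (rule imageI)
  next
    fix x y assume xy: "x \<in> carrier PI" "y \<in> carrier PI"
    obtain A where A: "A \<in> ob C" "x = cls A" using xy(1) carrier_PI by auto
    obtain B where B: "B \<in> ob C" "y = cls B" using xy(2) carrier_PI by auto
    note AB = A B
    have D: "bp A B \<in> ob C" using AB by simp
    have "fo (bp A B) - (fo A + fo B) \<in> RR" using h2[OF AB(1) AB(3) bp[OF AB(1,3)]] by (simp add: algebra_simps)
    hence "r_coset FG RR (fo (bp A B)) = r_coset FG RR (fo A + fo B)"
      by (rule coset_eq[OF fo_carrier[OF D] FG_add[OF fo_carrier[OF AB(1)] fo_carrier[OF AB(3)]]])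
    also have "\<dots> = set_mult FG (r_coset FG RR (fo A)) (r_coset FG RR (fo B))"
      using normal.rcos_sum[OF RR_normal fo_carrier[OF AB(1)] fo_carrier[OF AB(3)]] by simp
    finally show "hh (mult PI x y) = mult (K0 n C N) (hh x) (hh y)"
      unfolding AB(2,4) MULT_bp[OF AB(1,3)] hh_cls[OF D] hh_cls[OF AB(1)] hh_cls[OF AB(3)] mult_K0 K0_class_def .
  qed
  have inj: "inj_on hh (carrier PI)"
  proof (rule inj_onI)
    fix x y assume xy: "x \<in> carrier PI" "y \<in> carrier PI" and e: "hh x = hh y"
    obtain A where A: "A \<in> ob C" "x = cls A" using xy(1) carrier_PI by auto
    obtain B where B: "B \<in> ob C" "y = cls B" using xy(2) carrier_PI by auto
    note AB = A B
    have "r_coset FG RR (fo A) = r_coset FG RR (fo B)"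
      using e unfolding AB(2,4) hh_cls[OF AB(1)] hh_cls[OF AB(3)] K0_class_def .
    hence "fo A - fo B \<in> RR" by (rule coset_eqD[OF fo_carrier[OF AB(1)] fo_carrier[OF AB(3)]])
    thus "x = y" unfolding AB(2,4) by (rule h4[OF AB(1) AB(3)])
  qed
  have surj: "hh ` carrier PI = carrier (K0 n C N)"
  proof
    show "hh ` carrier PI \<subseteq> carrier (K0 n C N)" using hom_in_carrier[OF hom] by blast
  next
    show "carrier (K0 n C N) \<subseteq> hh ` carrier PI"
    proof
      fix c assume "c \<in> carrier (K0 n C N)"
      then obtain x where x: "x \<in> carrier FG" "c = r_coset FG RR x" using carrier_K0 by blast
      obtain A where A: "A \<in> ob C" "x - fo A \<in> RR" using h3[OF x(1)] by blast
      have "c = r_coset FG RR (fo A)" using x coset_eq[OF x(1) fo_carrier[OF A(1)] A(2)] by simp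
      also have "\<dots> = hh (cls A)" using hh_cls[OF A(1)] unfolding K0_class_def by simp
      finally have "c = hh (cls A)" .
      moreover have "cls A \<in> carrier PI" using A(1) carrier_PI by simp
      ultimately show "c \<in> hh ` carrier PI" by (rule image_eqI)
    qed
  qed
  show ?thesis unfolding iso_def bij_betw_def using hom inj surj by blast
qed

end

theorem proposition2p3:
  fixes n :: nat and C :: "('o, 'm) addcat" and So :: "'o \<Rightarrow> 'o" and Sm :: "'m \<Rightarrow> 'm"
    and N :: "('o, 'm) nseq set"
  assumes "odd n" and "3 \<le> n" and "n_angulated n C So Sm N"
  shows "equiv (ob C) {(A, B). sim_rel n C N A B}
    \<and> comm_group (pi_group n C N)
    \<and> (\<forall>A\<in>ob C. \<forall>B\<in>ob C. \<forall>X. biprod C X A B \<longrightarrow>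
         mult (pi_group n C N) (sim_class n C N A) (sim_class n C N B) = sim_class n C N X)
    \<and> (\<forall>A\<in>ob C. inv\<^bsub>pi_group n C N\<^esub> (sim_class n C N A) = sim_class n C N (So A))
    \<and> (\<exists>h. h \<in> iso (pi_group n C N) (K0 n C N) \<and>
           (\<forall>A\<in>ob C. h (sim_class n C N A) = K0_class n C N A))"
proof -
  have add: "is_additive C" using assms(3) unfolding n_angulated_def by blast
  interpret acat C by (rule acat.intro[OF add])
  interpret nang C n So Sm N by (rule nang.intro[OF acat_axioms]) (rule nang_axioms.intro[OF assms(1) assms(3)])
  show ?thesis
  proof (intro conjI)
    show "equiv (ob C) {(A, B). sim_rel n C N A B}" by (rule equiv_sr)
    show "comm_group (pi_group n C N)" by (rule PI_comm_group)
    show "\<forall>A\<in>ob C. \<forall>B\<in>ob C. \<forall>X. biprod C X A B \<longrightarrow>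
         mult (pi_group n C N) (sim_class n C N A) (sim_class n C N B) = sim_class n C N X"
      using MULT by blast
    show "\<forall>A\<in>ob C. inv\<^bsub>pi_group n C N\<^esub> (sim_class n C N A) = sim_class n C N (So A)"
      using INV_PI by blast
    show "\<exists>h. h \<in> iso (pi_group n C N) (K0 n C N) \<and>
           (\<forall>A\<in>ob C. h (sim_class n C N A) = K0_class n C N A)"
      using hh_iso hh_cls by blast
  qed
qed

end
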